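(* Let $E_0,E,X,U$ be Banach spaces, $Z=X\times U$, $Q\subset E$ nonempty closed convex, and let $I\colon Z\to\mathbb{R}^m$, $F\colon Z\to E_0$, $G\colon Z\to E$. Consider (MP2): minimize $I(x,u)$ with respect to $\mathbb{R}^m_+$ subject to $F(x,u)=0$ and $G(x,u)\in Q$; let $D=\{z\in Z:F(z)=0\}$. Let $z_0=(x_0,u_0)$ be feasible for (MP2) and assume: (A1) there are $r_1,r_1'>0$ such that $I,F,G$ are twice continuously Fréchet differentiable on $B_X(x_0,r_1)\times B_U(u_0,r_1')$; (A2) $F_x(z_0)\colon X\to E_0$ is bijective; (A3) $\nabla G(z_0)(T(D;z_0))=E$. If $z_0$ is a locally weak Pareto solution of (MP2), then for each $d\in\mathcal{C}_2(z_0)$ there exists a triple $(\lambda,v^*,e^* )\in\Lambda_2(z_0)$ such that $\langle\lambda,\nabla^2 I(z_0)(d,d)\rangle+\langle v^*,\nabla^2F(z_0)(d,d)\rangle+\langle e^*,\nabla^2G(z_0)(d,d)\rangle\ge0$.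
   Context: $z_0$ is a locally weak Pareto solution of (MP2) if there is $\epsilon>0$ such that $I(z)-I(z_0)\notin-\mathrm{int}\,\mathbb{R}^m_+$ for every feasible $z=(x,u)$ with $\|x-x_0\|\le\epsilon$, $\|u-u_0\|\le\epsilon$. $T(D;z_0)$ is the contingent cone $\{h:\exists t_k\to0^+,\exists h_k\to h,\ z_0+t_kh_k\in D\}$. $\Lambda_2(z_0)$ is the set of $(\lambda,v^*,e^* )\in\mathbb{R}^m_+\times E_0^*\times E^*$ with $|\lambda|=1$, $\nabla_z\mathcal{L}_2(z_0,\lambda,v^*,e^* )=0$ and $e^*\in N(Q;G(z_0))=\{e^*:\langle e^*,e-G(z_0)\rangle\le0\ \forall e\in Q\}$, where $\mathcal{L}_2(z,\lambda,v^*,e^* )=\langle\lambda,I(z)\rangle+\langle v^*,F(z)\rangle+\langle e^*,G(z)\rangle$. $\mathcal{C}_2(z_0)$ is the closure in $Z$ of $\mathcal{C}_{02}(z_0)=\{d\in Z:\nabla I(z_0)d\in-\mathbb{R}^m_+,\ \nabla F(z_0)d=0,\ \nabla G(z_0)d\in\mathrm{cone}(Q-G(z_0))\}$, with $\mathrm{cone}(Q-G(z_0))=\{\mu(q-G(z_0)):q\in Q,\mu>0\}$. *)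

theory Defs
  imports "HOL-Analysis.Analysis"
begin

definition contingent_cone :: "'a::real_normed_vector set \<Rightarrow> 'a \<Rightarrow> 'a set" where
  "contingent_cone D z0 = {h. \<exists>t hs. (\<forall>k. t k > 0) \<and> t \<longlonglongrightarrow> 0 \<and> hs \<longlonglongrightarrow> h
       \<and> (\<forall>k. z0 + t k *\<^sub>R hs k \<in> D)}"

definition cone_of_diff :: "'a::real_vector set \<Rightarrow> 'a \<Rightarrow> 'a set" where
  "cone_of_diff Q g = {\<mu> *\<^sub>R (q - g) | q \<mu>. q \<in> Q \<and> \<mu> > 0}"

definition normal_cone_cvx :: "'a::real_normed_vector set \<Rightarrow> 'a \<Rightarrow> ('a \<Rightarrow>\<^sub>L real) set" where
  "normal_cone_cvx Q g = {e. \<forall>q\<in>Q. blinfun_apply e (q - g) \<le> 0}"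

definition loc_weak_pareto ::
  "('x::real_normed_vector \<times> 'u::real_normed_vector \<Rightarrow> real^'m::finite) \<Rightarrow>
   ('x \<times> 'u \<Rightarrow> 'e0::real_normed_vector) \<Rightarrow> ('x \<times> 'u \<Rightarrow> 'e::real_normed_vector) \<Rightarrow>
   'e set \<Rightarrow> 'x \<times> 'u \<Rightarrow> bool" where
  "loc_weak_pareto I F G Q z0 \<longleftrightarrow>
     (\<exists>\<epsilon>>0. \<forall>x u. F (x,u) = 0 \<and> G (x,u) \<in> Q \<and> norm (x - fst z0) \<le> \<epsilon> \<and> norm (u - snd z0) \<le> \<epsilon>
        \<longrightarrow> \<not> (\<forall>i. (I (x,u) - I z0) $ i < 0))"

text \<open>Critical cone C_2(z0) (closure of C_02(z0)); I', F', G' are the first derivatives at z0.\<close>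
definition crit_cone ::
  "('z::real_normed_vector \<Rightarrow>\<^sub>L (real^'m::finite)) \<Rightarrow> ('z \<Rightarrow>\<^sub>L 'e0::real_normed_vector) \<Rightarrow>
   ('z \<Rightarrow>\<^sub>L 'e::real_normed_vector) \<Rightarrow> 'e set \<Rightarrow> 'e \<Rightarrow> 'z set" where
  "crit_cone dI dF dG Q g = closure {d. (\<forall>i. (blinfun_apply dI d) $ i \<le> 0) \<and> blinfun_apply dF d = 0 \<and> blinfun_apply dG d \<in> cone_of_diff Q g}"

definition Lambda2 ::
  "('z::real_normed_vector \<Rightarrow>\<^sub>L (real^'m::finite)) \<Rightarrow> ('z \<Rightarrow>\<^sub>L 'e0::real_normed_vector) \<Rightarrow>
   ('z \<Rightarrow>\<^sub>L 'e::real_normed_vector) \<Rightarrow> 'e set \<Rightarrow> 'e \<Rightarrow>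
   ((real^'m) \<times> ('e0 \<Rightarrow>\<^sub>L real) \<times> ('e \<Rightarrow>\<^sub>L real)) set" where
  "Lambda2 dI dF dG Q g = {(lam, v, e). (\<forall>i. lam $ i \<ge> 0) \<and> norm lam = 1
      \<and> (\<forall>h. lam \<bullet> blinfun_apply dI h + blinfun_apply v (blinfun_apply dF h) + blinfun_apply e (blinfun_apply dG h) = 0) \<and> e \<in> normal_cone_cvx Q g}"

definition C2_on ::
  "'z::real_normed_vector set \<Rightarrow> ('z \<Rightarrow> 'b::real_normed_vector) \<Rightarrow> ('z \<Rightarrow> 'z \<Rightarrow>\<^sub>L 'b)
   \<Rightarrow> ('z \<Rightarrow> 'z \<Rightarrow>\<^sub>L 'z \<Rightarrow>\<^sub>L 'b) \<Rightarrow> bool" where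
  "C2_on S f f1 f2 \<longleftrightarrow> (\<forall>z\<in>S. (f has_derivative blinfun_apply (f1 z)) (at z)
      \<and> (f1 has_derivative blinfun_apply (f2 z)) (at z)) \<and> continuous_on S f2"

end

theory Submission
  imports Defs
begin


lemma iterate_solve:
  fixes \<Phi> :: "'a::banach \<Rightarrow> 'b::real_normed_vector"
  assumes cont: "continuous_on (cball zc R) \<Phi>"
   and M: "M \<ge> 0"
   and step: "\<And>z. z \<in> cball zc R \<Longrightarrow> \<exists>x. norm x \<le> M * norm (y - \<Phi> z) \<and>
                 (z + x \<in> cball zc R \<longrightarrow> norm (y - \<Phi> (z + x)) \<le> norm (y - \<Phi> z) / 2)"
   and zp: "dist zc zp + 2 * M * norm (y - \<Phi> zp) \<le> R"
  shows "\<exists>z. \<Phi> z = y \<and> norm (z - zp) \<le> 2 * M * norm (y - \<Phi> zp)"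
proof -
  obtain st where st: "\<And>z. z \<in> cball zc R \<Longrightarrow> norm (st z) \<le> M * norm (y - \<Phi> z) \<and>
                 (z + st z \<in> cball zc R \<longrightarrow> norm (y - \<Phi> (z + st z)) \<le> norm (y - \<Phi> z) / 2)"
    using step by metis
  define s where "s = rec_nat zp (\<lambda>_ z. z + st z)"
  have s0: "s 0 = zp" and sS: "\<And>k. s (Suc k) = s k + st (s k)" by (simp_all add: s_def)
  define \<rho> where "\<rho> = norm (y - \<Phi> zp)"
  have \<rho>0: "\<rho> \<ge> 0" by (simp add: \<rho>_def)
  have M\<rho>: "M * \<rho> \<ge> 0" using M \<rho>0 by simp
  have inv: "s k \<in> cball zc R \<and> norm (y - \<Phi> (s k)) \<le> \<rho> / 2^k \<and> norm (s k - zp) \<le> 2*M*\<rho>*(1 - 1/2^k)" for k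
  proof (induction k)
    case 0
    then show ?case using zp M \<rho>0 by (simp add: s0 \<rho>_def mem_cball) (smt (verit) mult_nonneg_nonneg norm_ge_zero)
  next
    case (Suc k)
    let ?x = "st (s k)"
    have sk: "s k \<in> cball zc R" and r: "norm (y - \<Phi> (s k)) \<le> \<rho> / 2^k"
      and d: "norm (s k - zp) \<le> 2*M*\<rho>*(1 - 1/2^k)" using Suc by auto
    have nx: "norm ?x \<le> M * (\<rho> / 2^k)"
      using st[OF sk] r M by (meson mult_left_mono order_trans)
    have "norm (s (Suc k) - zp) \<le> norm (s k - zp) + norm ?x"
      by (simp add: sS) (metis add_diff_eq diff_add_eq norm_triangle_ineq add.commute)
    also have "\<dots> \<le> 2*M*\<rho>*(1 - 1/2^k) + M * (\<rho> / 2^k)" using d nx by simp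
    also have "\<dots> = 2*M*\<rho>*(1 - 1/2^Suc k)" by (simp add: field_simps)
    finally have d': "norm (s (Suc k) - zp) \<le> 2*M*\<rho>*(1 - 1/2^Suc k)" .
    have "2*M*\<rho>*(1 - 1/2^Suc k) \<le> 2*M*\<rho>" using M\<rho> by (simp add: mult_left_le)
    hence "dist zc (s (Suc k)) \<le> R"
      using d' zp dist_triangle[of zc "s (Suc k)" zp] unfolding \<rho>_def dist_norm
      by (smt (verit) norm_minus_commute)
    hence inS: "s (Suc k) \<in> cball zc R" by simp
    hence "norm (y - \<Phi> (s (Suc k))) \<le> norm (y - \<Phi> (s k)) / 2"
      using st[OF sk] by (simp add: sS)
    also have "\<dots> \<le> \<rho> / 2 ^ Suc k" using r by simp
    finally show ?case using inS d' by simp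
  qed
  define x where "x k = s (Suc k) - s k" for k
  have nxk: "norm (x k) \<le> (M*\<rho>) * (1/2)^k" for k
  proof -
    have "norm (x k) = norm (st (s k))" by (simp add: x_def sS)
    also have "\<dots> \<le> M * norm (y - \<Phi> (s k))" using st inv by blast
    also have "\<dots> \<le> M * (\<rho>/2^k)" using inv[of k] M by (intro mult_left_mono) auto
    finally show ?thesis by (simp add: power_divide)
  qed
  have sumn: "summable (\<lambda>k. norm (x k))"
    by (rule summable_comparison_test[of _ "\<lambda>k. (M*\<rho>) * (1/2)^k"])
       (use nxk in \<open>simp_all add: summable_mult summable_geometric\<close>)
  have sx: "summable x" using sumn summable_norm_cancel by blast
  have tele: "s k = zp + (\<Sum>j<k. x j)" for k
    by (induction k) (simp_all add: s0 x_def)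
  have lim: "s \<longlonglongrightarrow> zp + suminf x"
    unfolding tele by (intro tendsto_add tendsto_const summable_LIMSEQ sx)
  define zs where "zs = zp + suminf x"
  have zin: "zs \<in> cball zc R"
    using closed_cball lim inv unfolding zs_def by (metis closed_sequentially)
  have "(\<lambda>k. \<Phi> (s k)) \<longlonglongrightarrow> \<Phi> zs"
    proof -
    have "\<forall>n. s n \<in> cball zc R" using inv by blast
    thus ?thesis using cont zin lim unfolding zs_def continuous_on_sequentially comp_def by blast
  qed
  moreover have "(\<lambda>k. \<Phi> (s k)) \<longlonglongrightarrow> y"
  proof -
    have l0: "(\<lambda>k. \<rho> / 2^k) \<longlonglongrightarrow> 0"
      by (intro LIMSEQ_divide_realpow_zero) auto
    have ev: "\<forall>\<^sub>F k in sequentially. norm (\<Phi> (s k) - y) \<le> \<rho> / 2^k"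
      using inv by (intro always_eventually allI) (simp add: norm_minus_commute)
    have "(\<lambda>k. norm (\<Phi> (s k) - y)) \<longlonglongrightarrow> 0"
      by (rule tendsto_sandwich[OF _ ev tendsto_const l0]) simp
    hence "(\<lambda>k. \<Phi> (s k) - y) \<longlonglongrightarrow> 0" by (simp only: tendsto_norm_zero_iff)
    thus ?thesis by (rule LIM_zero_cancel)
  qed
  ultimately have "\<Phi> zs = y" using LIMSEQ_unique by blast
  moreover have "norm (zs - zp) \<le> 2 * M * \<rho>"
  proof (rule tendsto_le[OF trivial_limit_sequentially])
    show "(\<lambda>k. norm (s k - zp)) \<longlonglongrightarrow> norm (zs - zp)"
      using lim unfolding zs_def by (intro tendsto_intros)
    show "(\<lambda>k. 2*M*\<rho>) \<longlonglongrightarrow> 2*M*\<rho>" by simp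
    show "\<forall>\<^sub>F k in sequentially. norm (s k - zp) \<le> 2 * M * \<rho>"
    proof (intro always_eventually allI)
      fix k
      have "2*M*\<rho>*(1-1/2^k) \<le> 2*M*\<rho>" using M\<rho> by (simp add: mult_left_le)
      thus "norm (s k - zp) \<le> 2 * M * \<rho>" using inv[of k] by linarith
    qed
  qed
  ultimately show ?thesis unfolding \<rho>_def by blast
qed



lemma open_mapping_approx:
  fixes f :: "'a::banach \<Rightarrow> 'b::banach"
  assumes lin: "bounded_linear f" and su: "surj f"
  shows "\<exists>M\<ge>0. \<forall>y. \<forall>\<eta>>0. \<exists>x. norm x \<le> M * norm y \<and> norm (f x - y) \<le> \<eta>"
proof -
  interpret f: bounded_linear f by (rule lin)
  define T where "T n = closure (f ` ball 0 (real n))" for n :: nat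
  have "\<exists>n. interior (T n) \<noteq> {}"
  proof (rule ccontr)
    assume "\<not> ?thesis"
    hence emp: "\<And>n. interior (T n) = {}" by blast
    have cl: "closed (T n)" for n unfolding T_def by simp
    have "euclidean interior_of \<Union>(range T) = {}"
      by (rule Baire_category_alt) (auto simp: completely_metrizable_space_euclidean closed_closedin[symmetric] cl emp)
    moreover have "\<Union>(range T) = UNIV"
    proof -
      { fix y :: 'b
        obtain x where "y = f x" using su by (metis surjD)
        obtain n :: nat where "norm x < real n" using reals_Archimedean2 by blast
        hence "y \<in> T n" unfolding T_def using \<open>y = f x\<close> closure_subset by fastforce
        hence "y \<in> \<Union>(range T)" by blast }
      thus ?thesis by blast
    qed
    ultimately show False by simp
  qed
  then obtain n where "interior (T n) \<noteq> {}" by blast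
  then obtain y0 \<epsilon> where \<epsilon>: "\<epsilon> > 0" "ball y0 \<epsilon> \<subseteq> T n"
    by (metis all_not_in_conv open_contains_ball open_interior interior_subset subset_trans)
  have approx: "\<exists>x. norm x < 2 * real n \<and> norm (f x - y) < \<eta>" if y: "norm y < \<epsilon>" and \<eta>: "\<eta> > 0" for y \<eta>
  proof -
    have "y0 + y \<in> closure (f ` ball 0 (real n))" "y0 \<in> closure (f ` ball 0 (real n))"
      using \<epsilon> y unfolding T_def by (auto simp: dist_norm)
    then obtain a1 a2 where a1: "a1 \<in> f ` ball 0 (real n)" "dist a1 (y0 + y) < \<eta>/2"
      and a2: "a2 \<in> f ` ball 0 (real n)" "dist a2 y0 < \<eta>/2"
      using \<eta> unfolding closure_approachable by (meson half_gt_zero)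
    then obtain x1 x2 where x: "norm x1 < real n" "norm x2 < real n" "a1 = f x1" "a2 = f x2" by auto
    have "norm (x1 - x2) < 2 * real n"
      using x norm_triangle_ineq4[of x1 x2] by linarith
    moreover have "norm (f (x1 - x2) - y) < \<eta>"
    proof -
      have "f (x1 - x2) - y = (a1 - (y0 + y)) - (a2 - y0)" using x f.diff by (simp add: algebra_simps)
      hence "norm (f (x1 - x2) - y) \<le> norm (a1 - (y0 + y)) + norm (a2 - y0)"
        by (metis norm_triangle_ineq4)
      thus ?thesis using a1 a2 by (simp add: dist_norm)
    qed
    ultimately show ?thesis by blast
  qed
  define M where "M = 4 * real n / \<epsilon>"
  have M0: "M \<ge> 0" using \<epsilon> by (simp add: M_def)
  have "\<exists>x. norm x \<le> M * norm y \<and> norm (f x - y) \<le> \<eta>" if \<eta>: "\<eta> > 0" for y \<eta>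
  proof (cases "y = 0")
    case True then show ?thesis using \<eta> by (intro exI[of _ 0]) simp
  next
    case False
    define c where "c = (\<epsilon>/2) / norm y"
    have c: "c > 0" using False \<epsilon> by (simp add: c_def)
    have "norm (c *\<^sub>R y) < \<epsilon>" using False \<epsilon> by (simp add: c_def)
    then obtain x' where x': "norm x' < 2 * real n" "norm (f x' - c *\<^sub>R y) < c * \<eta>"
      using approx c \<eta> by (meson mult_pos_pos)
    define x where "x = (1/c) *\<^sub>R x'"
    have "norm x = norm x' / c" using c by (simp add: x_def)
    also have "\<dots> \<le> 2 * real n / c" using x' c by (simp add: divide_right_mono)
    also have "\<dots> = M * norm y" using False \<epsilon> by (simp add: c_def M_def field_simps)
    finally have "norm x \<le> M * norm y" .
    moreover have "f x - y = (1/c) *\<^sub>R (f x' - c *\<^sub>R y)" using c by (simp add: x_def f.scaleR algebra_simps)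
    hence "norm (f x - y) = norm (f x' - c *\<^sub>R y) / c" using c by simp
    hence "c * norm (f x - y) < c * \<eta>" using x' c by (simp add: mult.commute)
    hence "norm (f x - y) \<le> \<eta>" using c by (simp add: mult_less_cancel_left_pos)
    ultimately show ?thesis by blast
  qed
  with M0 show ?thesis by blast
qed

lemma open_mapping_quant:
  fixes f :: "'a::banach \<Rightarrow> 'b::banach"
  assumes lin: "bounded_linear f" and su: "surj f"
  shows "\<exists>C>0. \<forall>y. \<exists>x. f x = y \<and> norm x \<le> C * norm y"
proof -
  interpret f: bounded_linear f by (rule lin)
  obtain M where M: "M \<ge> 0" "\<And>y \<eta>. \<eta> > 0 \<Longrightarrow> \<exists>x. norm x \<le> M * norm y \<and> norm (f x - y) \<le> \<eta>"
    using open_mapping_approx[OF lin su] by blast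
  have "\<exists>x. f x = y \<and> norm x \<le> (2*M+1) * norm y" for y
  proof -
    have "\<exists>z. f z = y \<and> norm (z - 0) \<le> 2 * M * norm (y - f 0)"
    proof (rule iterate_solve[where zc=0 and R="2*M*norm y"])
      show "continuous_on (cball 0 (2 * M * norm y)) f"
        using linear_continuous_on[OF lin] by blast
      show "0 \<le> M" by fact
      show "dist 0 0 + 2 * M * norm (y - f 0) \<le> 2 * M * norm y" by (simp add: f.zero)
      fix z
      show "\<exists>x. norm x \<le> M * norm (y - f z) \<and>
             (z + x \<in> cball 0 (2 * M * norm y) \<longrightarrow> norm (y - f (z + x)) \<le> norm (y - f z) / 2)"
      proof (cases "y - f z = 0")
        case True then show ?thesis by (intro exI[of _ 0]) simp
      next
        case False
        then obtain x where x: "norm x \<le> M * norm (y - f z)" "norm (f x - (y - f z)) \<le> norm (y - f z)/2"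
          using M(2)[of "norm (y - f z)/2" "y - f z"] by auto
        have "y - f (z + x) = - (f x - (y - f z))" by (simp add: f.add algebra_simps)
        hence "norm (y - f (z + x)) = norm (f x - (y - f z))" by (metis norm_minus_cancel)
        thus ?thesis using x by auto
      qed
    qed
    then obtain z where "f z = y" "norm z \<le> 2 * M * norm y" by (auto simp: f.zero)
    moreover have "2 * M * norm y \<le> (2*M+1) * norm y" by (simp add: mult_right_mono)
    ultimately show ?thesis by (blast intro: order_trans)
  qed
  moreover have "2*M+1 > 0" using M by simp
  ultimately show ?thesis by blast
qed



lemma graves:
  fixes \<Phi> :: "'a::banach \<Rightarrow> 'b::banach" and A :: "'a \<Rightarrow> 'b"
  assumes lin: "bounded_linear A" and C: "C > 0"
    and openA: "\<And>y. \<exists>x. A x = y \<and> norm x \<le> C * norm y"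
    and strict: "\<And>z z'. z \<in> cball zc r \<Longrightarrow> z' \<in> cball zc r \<Longrightarrow>
                   norm (\<Phi> z - \<Phi> z' - A (z - z')) \<le> (1/(2*C)) * norm (z - z')"
    and z: "dist zc z \<le> r/2" and y: "2*C*norm (y - \<Phi> z) \<le> r/2"
  shows "\<exists>z'. \<Phi> z' = y \<and> norm (z' - z) \<le> 2*C*norm (y - \<Phi> z)"
proof (rule iterate_solve[where zc=zc and R=r and M=C])
  interpret A: bounded_linear A by (rule lin)
  obtain K where K: "K > 0" "\<And>x. norm (A x) \<le> norm x * K" using A.pos_bounded by blast
  have "lipschitz_on (K + 1/(2*C)) (cball zc r) \<Phi>"
  proof (rule lipschitz_onI)
    fix a b assume ab: "a \<in> cball zc r" "b \<in> cball zc r"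
    have "\<Phi> a - \<Phi> b = (\<Phi> a - \<Phi> b - A (a - b)) + A (a - b)" by simp
    hence "norm (\<Phi> a - \<Phi> b) \<le> norm (\<Phi> a - \<Phi> b - A (a - b)) + norm (A (a - b))"
      by (metis norm_triangle_ineq)
    also have "\<dots> \<le> (1/(2*C)) * norm (a - b) + norm (a - b) * K"
      using strict[OF ab] K(2)[of "a - b"] by linarith
    finally show "dist (\<Phi> a) (\<Phi> b) \<le> (K + 1/(2*C)) * dist a b"
      by (simp add: dist_norm algebra_simps)
  next
    show "0 \<le> K + 1/(2*C)" using K C by simp
  qed
  thus "continuous_on (cball zc r) \<Phi>" by (rule lipschitz_on_continuous_on)
  show "0 \<le> C" using C by simp
  show "dist zc z + 2 * C * norm (y - \<Phi> z) \<le> r" using z y by simp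
  fix w assume w: "w \<in> cball zc r"
  obtain x where x: "A x = y - \<Phi> w" "norm x \<le> C * norm (y - \<Phi> w)" using openA by blast
  show "\<exists>x. norm x \<le> C * norm (y - \<Phi> w) \<and>
           (w + x \<in> cball zc r \<longrightarrow> norm (y - \<Phi> (w + x)) \<le> norm (y - \<Phi> w) / 2)"
  proof (intro exI conjI impI)
    show "norm x \<le> C * norm (y - \<Phi> w)" by (rule x(2))
    assume wx: "w + x \<in> cball zc r"
    have "y - \<Phi> (w + x) = - (\<Phi> (w + x) - \<Phi> w - A ((w + x) - w))" using x(1) by simp
    hence "norm (y - \<Phi> (w + x)) = norm (\<Phi> (w + x) - \<Phi> w - A ((w + x) - w))"
      by (metis norm_minus_cancel)
    also have "\<dots> \<le> (1/(2*C)) * norm x" using strict[OF wx w] by simp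
    also have "\<dots> \<le> (1/(2*C)) * (C * norm (y - \<Phi> w))" using x(2) C by (intro mult_left_mono) auto
    also have "\<dots> = norm (y - \<Phi> w) / 2" using C by simp
    finally show "norm (y - \<Phi> (w + x)) \<le> norm (y - \<Phi> w) / 2" .
  qed
qed



lemma strict_diff:
  fixes f :: "'a::real_normed_vector \<Rightarrow> 'b::real_normed_vector" and f1 :: "'a \<Rightarrow> 'a \<Rightarrow>\<^sub>L 'b"
  assumes S: "open S" "z0 \<in> S" and der: "\<And>z. z \<in> S \<Longrightarrow> (f has_derivative blinfun_apply (f1 z)) (at z)"
    and cont: "isCont f1 z0" and \<epsilon>: "\<epsilon> > 0"
  shows "\<exists>\<rho>>0. cball z0 \<rho> \<subseteq> S \<and> (\<forall>z\<in>cball z0 \<rho>. \<forall>z'\<in>cball z0 \<rho>.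
            norm (f z - f z' - f1 z0 (z - z')) \<le> \<epsilon> * norm (z - z'))"
proof -
  obtain \<delta> where \<delta>: "\<delta> > 0" "\<And>z. dist z z0 < \<delta> \<Longrightarrow> dist (f1 z) (f1 z0) < \<epsilon>"
    using cont \<epsilon> unfolding continuous_at_eps_delta by blast
  obtain \<rho>0 where \<rho>0: "\<rho>0 > 0" "cball z0 \<rho>0 \<subseteq> S" using S open_contains_cball by blast
  define \<rho> where "\<rho> = min \<rho>0 (\<delta>/2)"
  have \<rho>: "\<rho> > 0" "cball z0 \<rho> \<subseteq> S" using \<rho>0 \<delta> by (auto simp: \<rho>_def)
  have "norm (f z - f z' - f1 z0 (z - z')) \<le> \<epsilon> * norm (z - z')"
    if z: "z \<in> cball z0 \<rho>" and z': "z' \<in> cball z0 \<rho>" for z z'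
  proof -
    have "norm (f z - f z' - blinfun_apply (f1 z0) (z - z')) \<le> norm (z - z') * \<epsilon>"
    proof (rule differentiable_bound_linearization[where S="cball z0 \<rho>"])
      fix t :: real assume "t \<in> {0..1}"
      hence "(1 - t) *\<^sub>R z' + t *\<^sub>R z \<in> cball z0 \<rho>"
        using convex_cball[of z0 \<rho>] z z' unfolding convex_def by auto
      moreover have "(1 - t) *\<^sub>R z' + t *\<^sub>R z = z' + t *\<^sub>R (z - z')" by (simp add: algebra_simps)
      ultimately show "z' + t *\<^sub>R (z - z') \<in> cball z0 \<rho>" by simp
    next
      fix x assume x: "x \<in> cball z0 \<rho>"
      show "(f has_derivative blinfun_apply (f1 x)) (at x within cball z0 \<rho>)"
        using der x \<rho>(2) by (blast intro: has_derivative_at_withinI)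
      have "dist x z0 < \<delta>" using x \<delta> by (simp add: \<rho>_def dist_commute)
      hence "norm (f1 x - f1 z0) < \<epsilon>" using \<delta>(2) by (simp add: dist_norm)
      moreover have "onorm (blinfun_apply (f1 x) - blinfun_apply (f1 z0)) = norm (f1 x - f1 z0)"
        by (simp add: norm_blinfun.rep_eq fun_diff_def blinfun.diff_left[symmetric])
      ultimately show "onorm (blinfun_apply (f1 x) - blinfun_apply (f1 z0)) \<le> \<epsilon>" by simp
    next
      show "z0 \<in> cball z0 \<rho>" using \<rho> by simp
    qed
    thus ?thesis by (simp add: mult.commute)
  qed
  with \<rho> show ?thesis by blast
qed



lemma norm_blinfun2: "norm (blinfun_apply (blinfun_apply B a) b) \<le> norm B * norm a * norm b"
proof -
  have "norm (blinfun_apply (blinfun_apply B a) b) \<le> norm (blinfun_apply B a) * norm b" by (rule norm_blinfun)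
  also have "\<dots> \<le> norm B * norm a * norm b" by (intro mult_right_mono norm_blinfun) auto
  finally show ?thesis .
qed

lemma norm_blinfun2_le:
  assumes "norm a \<le> N" "norm b \<le> N"
  shows "norm (blinfun_apply (blinfun_apply B a) b) \<le> norm B * N^2"
proof -
  have N0: "N \<ge> 0" using assms(1) norm_ge_zero[of a] by linarith
  have "norm B * norm a * norm b \<le> norm B * N * N"
    using assms N0 by (intro mult_mono mult_left_mono) auto
  thus ?thesis using norm_blinfun2[of B a b] by (simp add: power2_eq_square)
qed

lemma taylor2:
  fixes f :: "'a::real_normed_vector \<Rightarrow> 'b::real_normed_vector" and f1 :: "'a \<Rightarrow> 'a \<Rightarrow>\<^sub>L 'b"
    and f2 :: "'a \<Rightarrow> 'a \<Rightarrow>\<^sub>L 'a \<Rightarrow>\<^sub>L 'b"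
  assumes S: "open S" "z0 \<in> S" and der: "\<And>z. z \<in> S \<Longrightarrow> (f has_derivative blinfun_apply (f1 z)) (at z)"
    and der2: "(f1 has_derivative blinfun_apply (f2 z0)) (at z0)" and \<epsilon>: "\<epsilon> > 0"
  shows "\<exists>\<delta>>0. \<forall>t. 0 < t \<and> t < \<delta> \<longrightarrow>
     norm (f (z0 + t *\<^sub>R d + (t^2/2) *\<^sub>R w) - f z0 - t *\<^sub>R f1 z0 d - (t^2/2) *\<^sub>R (f1 z0 w + f2 z0 d d)) \<le> \<epsilon> * t^2"
proof -
  define N where "N = norm d + norm w + 1"
  have N: "N > 0" "norm d \<le> N" "norm w \<le> N" unfolding N_def using norm_ge_zero[of d] norm_ge_zero[of w] by linarith+
  define K where "K = 2 * norm (f2 z0) * N^2"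
  have K: "K \<ge> 0" by (simp add: K_def)
  define \<eta> where "\<eta> = \<epsilon> / (2 * N^2)"
  have \<eta>: "\<eta> > 0" using \<epsilon> N by (simp add: \<eta>_def)
  obtain \<delta>1 where \<delta>1: "\<delta>1 > 0" "\<And>y. norm (y - z0) < \<delta>1 \<Longrightarrow>
      norm (f1 y - f1 z0 - blinfun_apply (f2 z0) (y - z0)) \<le> \<eta> * norm (y - z0)"
    using der2 \<eta> unfolding has_derivative_at_alt by blast
  obtain \<rho>0 where \<rho>0: "\<rho>0 > 0" "ball z0 \<rho>0 \<subseteq> S" using S open_contains_ball by blast
  define \<delta> where "\<delta> = min 1 (min (\<delta>1/N) (min (\<rho>0/N) (\<epsilon>/(2*K+1))))"
  have \<delta>: "\<delta> > 0" using \<delta>1 \<rho>0 N \<epsilon> K by (simp add: \<delta>_def)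
  define c where "c s = z0 + s *\<^sub>R d + (s^2/2) *\<^sub>R w" for s :: real
  define D where "D s = f1 (c s) (d + s *\<^sub>R w) - f1 z0 d - s *\<^sub>R (f1 z0 w + f2 z0 d d)" for s :: real
  define \<psi> where "\<psi> s = f (c s) - s *\<^sub>R f1 z0 d - (s^2/2) *\<^sub>R (f1 z0 w + f2 z0 d d)" for s :: real
  have hbound: "norm (c s - z0) \<le> s * N" if "0 \<le> s" "s \<le> 1" for s
  proof -
    have "norm (c s - z0) \<le> s * norm d + (s^2/2) * norm w"
      unfolding c_def using that by (simp add: norm_triangle_le)
    also have "(s^2/2) * norm w \<le> s * norm w"
    proof (rule mult_right_mono)
      have "s * s \<le> s" using that mult_left_le[of s s] by simp
      thus "s^2/2 \<le> s" using that by (simp add: power2_eq_square)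
    qed simp
    finally show ?thesis using that unfolding N_def by (simp add: algebra_simps)
  qed
  have small: "norm (c s - z0) < \<delta>1" "c s \<in> S" if "0 \<le> s" "s < \<delta>" for s
  proof -
    have s1: "s \<le> 1" using that by (simp add: \<delta>_def)
    have "s * N < \<delta> * N" using that N by simp
    also have "\<delta> * N \<le> \<delta>1" using N by (simp add: \<delta>_def) (metis min.cobounded2 min.cobounded1 le_divide_eq order_trans mult.commute)
    finally show "norm (c s - z0) < \<delta>1" using hbound[OF that(1) s1] by linarith
    have "\<delta> * N \<le> \<rho>0" using N by (simp add: \<delta>_def) (metis min.cobounded2 min.cobounded1 le_divide_eq order_trans mult.commute)
    hence "norm (c s - z0) < \<rho>0" using hbound[OF that(1) s1] \<open>s * N < \<delta> * N\<close> by linarith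
    thus "c s \<in> S" using \<rho>0 by (auto simp: dist_norm norm_minus_commute)
  qed
  have Dbound: "norm (D s) \<le> \<epsilon> * s" if "0 \<le> s" "s < \<delta>" for s
  proof -
    have s1: "s \<le> 1" using that by (simp add: \<delta>_def)
    define h where "h = c s - z0"
    have h: "h = s *\<^sub>R d + (s^2/2) *\<^sub>R w" by (simp add: h_def c_def)
    define R where "R = f1 (c s) - f1 z0 - blinfun_apply (f2 z0) h"
    have nR: "norm R \<le> \<eta> * norm h" using \<delta>1(2)[OF small(1)[OF that]] by (simp add: R_def h_def)
    have Rh: "norm h \<le> s * N" using hbound[OF that(1) s1] by (simp add: h_def)
    have "D s = R (d + s *\<^sub>R w) + ((s^2) *\<^sub>R f2 z0 d w + (s^2/2) *\<^sub>R f2 z0 w d + (s^3/2) *\<^sub>R f2 z0 w w)"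
      unfolding D_def R_def h
      by (simp add: blinfun.add_left blinfun.add_right blinfun.scaleR_left blinfun.scaleR_right
          blinfun.diff_left algebra_simps power2_eq_square power3_eq_cube)
    hence "norm (D s) \<le> norm (R (d + s *\<^sub>R w)) + norm ((s^2) *\<^sub>R f2 z0 d w + (s^2/2) *\<^sub>R f2 z0 w d + (s^3/2) *\<^sub>R f2 z0 w w)"
      by (simp add: norm_triangle_ineq)
    also have "norm (R (d + s *\<^sub>R w)) \<le> \<epsilon>/2 * s"
    proof -
      have "norm (s *\<^sub>R w) \<le> norm w" using s1 that(1) by (simp add: mult_left_le_one_le)
      hence "norm (d + s *\<^sub>R w) \<le> N" using norm_triangle_ineq[of d "s *\<^sub>R w"] unfolding N_def by linarith
      hence "norm (R (d + s *\<^sub>R w)) \<le> norm R * N" using norm_blinfun[of R] by (meson mult_left_mono norm_ge_zero order_trans)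
      also have "\<dots> \<le> (\<eta> * (s * N)) * N"
      proof (rule mult_right_mono)
        show "norm R \<le> \<eta> * (s * N)" using nR mult_left_mono[OF Rh, of \<eta>] \<eta> by linarith
      qed (use N in simp)
      also have "\<dots> = \<epsilon>/2 * s" using N by (simp add: \<eta>_def power2_eq_square field_simps)
      finally show ?thesis .
    qed
    also have "norm ((s^2) *\<^sub>R f2 z0 d w + (s^2/2) *\<^sub>R f2 z0 w d + (s^3/2) *\<^sub>R f2 z0 w w) \<le> \<epsilon>/2 * s"
    proof -
      have b1: "norm (f2 z0 d w) \<le> norm (f2 z0) * N^2" and b2: "norm (f2 z0 w d) \<le> norm (f2 z0) * N^2"
        and b3: "norm (f2 z0 w w) \<le> norm (f2 z0) * N^2"
        using norm_blinfun2_le[of _ N _ "f2 z0"] N by auto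
      have "norm ((s^2) *\<^sub>R f2 z0 d w + (s^2/2) *\<^sub>R f2 z0 w d + (s^3/2) *\<^sub>R f2 z0 w w)
          \<le> s^2 * norm (f2 z0 d w) + (s^2/2) * norm (f2 z0 w d) + (s^3/2) * norm (f2 z0 w w)"
        using that by (simp add: norm_triangle_le norm_triangle_ineq)
      also have "\<dots> \<le> s^2 * (norm (f2 z0) * N^2) + (s^2/2) * (norm (f2 z0) * N^2) + (s^2/2) * (norm (f2 z0) * N^2)"
      proof -
        have "s^2 * s \<le> s^2" using that s1 mult_left_le[of s "s^2"] by simp
        hence "s^3 \<le> s^2" by (simp add: power3_eq_cube power2_eq_square)
        hence "(s^3/2) * norm (f2 z0 w w) \<le> (s^2/2) * (norm (f2 z0) * N^2)"
          using b3 that by (intro mult_mono) auto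
        moreover have "s^2 * norm (f2 z0 d w) \<le> s^2 * (norm (f2 z0) * N^2)" using b1 by (simp add: mult_left_mono)
        moreover have "(s^2/2) * norm (f2 z0 w d) \<le> (s^2/2) * (norm (f2 z0) * N^2)" using b2 by (simp add: mult_left_mono)
        ultimately show ?thesis by linarith
      qed
      also have "\<dots> = s * (s * K)" by (simp add: K_def power2_eq_square algebra_simps)
      also have "\<dots> \<le> s * (\<epsilon>/2)"
      proof (rule mult_left_mono[OF _ that(1)])
        have "s < \<epsilon>/(2*K+1)" using that by (simp add: \<delta>_def)
        hence "s * (2*K+1) < \<epsilon>" using K by (simp add: field_simps)
        thus "s * K \<le> \<epsilon>/2" using K that by (simp add: algebra_simps)
      qed
      finally show ?thesis by (simp add: mult.commute)
    qed
    finally show ?thesis by simp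
  qed
  show ?thesis
  proof (intro exI[of _ \<delta>] conjI allI impI \<delta>)
    fix t assume t: "0 < t \<and> t < \<delta>"
    have vd: "(\<psi> has_vector_derivative D s) (at s within {0..t})" if s: "s \<in> {0..t}" for s
    proof -
      have sS: "c s \<in> S" using small s t by auto
      have "(c has_vector_derivative (d + s *\<^sub>R w)) (at s within {0..t})"
        unfolding c_def by (auto intro!: derivative_eq_intros simp: power2_eq_square algebra_simps)
      hence cd: "(c has_derivative (\<lambda>r. r *\<^sub>R (d + s *\<^sub>R w))) (at s within {0..t})"
        by (simp add: has_vector_derivative_def)
      have "((\<lambda>s. f (c s)) has_vector_derivative f1 (c s) (d + s *\<^sub>R w)) (at s within {0..t})"
        unfolding has_vector_derivative_def
        using has_derivative_compose[OF cd der[OF sS]] by (simp add: blinfun.scaleR_right)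
      thus ?thesis unfolding \<psi>_def D_def
        by (auto intro!: derivative_eq_intros simp: power2_eq_square algebra_simps)
    qed
    have "norm (\<psi> t - \<psi> 0 - (t - 0) *\<^sub>R D 0) \<le> norm (t - 0) * (\<epsilon> * t)"
    proof (rule vector_differentiable_bound_linearization[OF vd])
      show "closed_segment 0 t \<subseteq> {0..t}" using t by (simp add: closed_segment_eq_real_ivl)
      show "0 \<in> {0..t}" using t by simp
      fix s assume "s \<in> {0..t}"
      hence "norm (D s) \<le> \<epsilon> * t" using Dbound[of s] t \<epsilon> by (smt (verit) atLeastAtMost_iff mult_left_mono)
      moreover have "D 0 = 0" by (simp add: D_def c_def)
      ultimately show "norm (D s - D 0) \<le> \<epsilon> * t" by simp
    qed auto
    moreover have "D 0 = 0" by (simp add: D_def c_def)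
    moreover have "\<psi> 0 = f z0" by (simp add: \<psi>_def c_def)
    ultimately show "norm (f (z0 + t *\<^sub>R d + (t^2/2) *\<^sub>R w) - f z0 - t *\<^sub>R f1 z0 d - (t^2/2) *\<^sub>R (f1 z0 w + f2 z0 d d)) \<le> \<epsilon> * t^2"
      using t by (simp add: \<psi>_def c_def power2_eq_square algebra_simps)
  qed
qed



lemma cone_zero: "g \<in> Q \<Longrightarrow> 0 \<in> cone_of_diff Q g"
  unfolding cone_of_diff_def by (rule CollectI, rule exI[of _ g], rule exI[of _ 1]) simp

lemma cone_self: "q \<in> Q \<Longrightarrow> q - g \<in> cone_of_diff Q g"
  unfolding cone_of_diff_def by (rule CollectI, rule exI[of _ q], rule exI[of _ 1]) simp

lemma cone_comb:
  assumes Q: "convex Q" and x: "x \<in> cone_of_diff Q g" and y: "y \<in> cone_of_diff Q g"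
    and a: "a \<ge> 0" and b: "b \<ge> 0" and ab: "a + b > 0"
  shows "a *\<^sub>R x + b *\<^sub>R y \<in> cone_of_diff Q g"
proof -
  obtain q1 \<mu>1 where 1: "x = \<mu>1 *\<^sub>R (q1 - g)" "q1 \<in> Q" "\<mu>1 > 0" using x unfolding cone_of_diff_def by blast
  obtain q2 \<mu>2 where 2: "y = \<mu>2 *\<^sub>R (q2 - g)" "q2 \<in> Q" "\<mu>2 > 0" using y unfolding cone_of_diff_def by blast
  define m where "m = a * \<mu>1 + b * \<mu>2"
  have m: "m > 0"
  proof -
    have "a * \<mu>1 \<ge> 0" "b * \<mu>2 \<ge> 0" using a b 1 2 by auto
    moreover have "a > 0 \<or> b > 0" using a b ab by linarith
    ultimately show ?thesis using 1 2 unfolding m_def by (auto intro: add_pos_nonneg add_nonneg_pos)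
  qed
  define q where "q = (a * \<mu>1 / m) *\<^sub>R q1 + (b * \<mu>2 / m) *\<^sub>R q2"
  have "q \<in> Q"
    unfolding q_def using Q 1 2 a b m
    by (intro convexD) (auto simp: m_def add_divide_distrib[symmetric])
  moreover have "a *\<^sub>R x + b *\<^sub>R y = m *\<^sub>R (q - g)"
  proof -
    have mq: "m *\<^sub>R q = (a*\<mu>1) *\<^sub>R q1 + (b*\<mu>2) *\<^sub>R q2" using m by (simp add: q_def scaleR_add_right)
    have "m *\<^sub>R (q - g) = m *\<^sub>R q - m *\<^sub>R g" by (simp add: scaleR_diff_right)
    also have "\<dots> = a *\<^sub>R x + b *\<^sub>R y" unfolding mq by (simp add: 1 2 m_def algebra_simps)
    finally show ?thesis by simp
  qed
  ultimately show ?thesis using m unfolding cone_of_diff_def by blast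
qed

lemma cone_add: "convex Q \<Longrightarrow> x \<in> cone_of_diff Q g \<Longrightarrow> y \<in> cone_of_diff Q g \<Longrightarrow> x + y \<in> cone_of_diff Q g"
  using cone_comb[of Q x g y 1 1] by simp

lemma cone_scale: "convex Q \<Longrightarrow> x \<in> cone_of_diff Q g \<Longrightarrow> k > 0 \<Longrightarrow> k *\<^sub>R x \<in> cone_of_diff Q g"
  using cone_comb[of Q x g x k 0] by simp

lemma factor_functional:
  fixes A :: "'a::real_normed_vector \<Rightarrow> 'b::real_normed_vector" and \<phi> :: "'a \<Rightarrow> real"
  assumes linA: "bounded_linear A" and C: "C \<ge> 0" and openA: "\<And>y. \<exists>x. A x = y \<and> norm x \<le> C * norm y"
    and lin\<phi>: "bounded_linear \<phi>" and ker: "\<And>x. A x = 0 \<Longrightarrow> \<phi> x = 0"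
  shows "\<exists>L :: 'b \<Rightarrow>\<^sub>L real. \<forall>x. \<phi> x = L (A x)"
proof -
  interpret A: bounded_linear A by (rule linA)
  interpret \<phi>: bounded_linear \<phi> by (rule lin\<phi>)
  define \<rho> where "\<rho> y = (SOME x. A x = y \<and> norm x \<le> C * norm y)" for y
  have \<rho>: "A (\<rho> y) = y" "norm (\<rho> y) \<le> C * norm y" for y
    using someI_ex[OF openA[of y]] unfolding \<rho>_def by auto
  define l where "l y = \<phi> (\<rho> y)" for y
  have key: "\<phi> x = l y" if "A x = y" for x y
  proof -
    have "A (x - \<rho> y) = 0" using that \<rho> by (simp add: A.diff)
    hence "\<phi> (x - \<rho> y) = 0" by (rule ker)
    thus ?thesis by (simp add: l_def \<phi>.diff)
  qed
  have "bounded_linear l"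
  proof
    fix y1 y2 show "l (y1 + y2) = l y1 + l y2"
      using key[of "\<rho> y1 + \<rho> y2" "y1 + y2"] \<rho> by (simp add: A.add \<phi>.add l_def)
  next
    fix r y show "l (r *\<^sub>R y) = r *\<^sub>R l y"
      using key[of "r *\<^sub>R \<rho> y" "r *\<^sub>R y"] \<rho> by (simp add: A.scaleR \<phi>.scaleR l_def)
  next
    obtain K where K: "K > 0" "\<And>x. norm (\<phi> x) \<le> norm x * K" using \<phi>.pos_bounded by blast
    show "\<exists>K. \<forall>y. norm (l y) \<le> norm y * K"
    proof (intro exI allI)
      fix y
      have "norm (l y) \<le> norm (\<rho> y) * K" using K by (simp add: l_def)
      also have "\<dots> \<le> (C * norm y) * K" using \<rho>(2) K by (intro mult_right_mono) auto
      finally show "norm (l y) \<le> norm y * (C * K)" by (simp add: algebra_simps)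
    qed
  qed
  hence "\<forall>x. \<phi> x = Blinfun l (A x)" using key by (simp add: bounded_linear_Blinfun_apply)
  thus ?thesis by blast
qed



lemma multiplier_C02:
  fixes I1 :: "'z::real_normed_vector \<Rightarrow>\<^sub>L (real^'m::finite)" and F1 :: "'z \<Rightarrow>\<^sub>L 'e0::real_normed_vector"
    and G1 :: "'z \<Rightarrow>\<^sub>L 'e::real_normed_vector" and a0 :: "real^'m" and b0 :: 'e0 and c0 :: 'e
  assumes Q: "convex Q" "g \<in> Q" and C: "C \<ge> 0"
    and openA: "\<And>a y. \<exists>h. F1 h = a \<and> G1 h = y \<and> norm h \<le> C * norm (a, y)"
    and primal: "\<And>w. F1 w = - b0 \<Longrightarrow> G1 w + c0 \<in> cone_of_diff Q g \<Longrightarrow> \<not> (\<forall>i. (I1 w + a0) $ i < 0)"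
  shows "\<exists>(lam, v, e) \<in> Lambda2 I1 F1 G1 Q g. lam \<bullet> a0 + blinfun_apply v b0 + blinfun_apply e c0 \<ge> 0"
proof -
  let ?K = "cone_of_diff Q g"
  define W where "W = {w. F1 w = - b0 \<and> G1 w + c0 \<in> ?K}"
  define Sa where "Sa = (\<lambda>w. I1 w + a0) ` W"
  define Nn where "Nn = {x :: real^'m. \<forall>i. x $ i < 0}"
  obtain w0 where w0: "F1 w0 = - b0" "G1 w0 = - c0" using openA by blast
  have w0W: "w0 \<in> W" using w0 cone_zero[OF Q(2)] by (simp add: W_def)
  have cSa: "convex Sa"
    unfolding convex_def
  proof (intro ballI allI impI)
    fix x y and u v :: real assume x: "x \<in> Sa" and y: "y \<in> Sa" and uv0: "0 \<le> u" "0 \<le> v" "u + v = 1"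
    have uv: "0 \<le> u \<and> 0 \<le> v \<and> u + v = 1" using uv0 by simp
    obtain w1 w2 where w: "w1 \<in> W" "w2 \<in> W" "x = I1 w1 + a0" "y = I1 w2 + a0"
      using x y by (auto simp: Sa_def)
    have "u *\<^sub>R (G1 w1 + c0) + v *\<^sub>R (G1 w2 + c0) \<in> ?K"
      using w uv by (intro cone_comb Q) (auto simp: W_def)
    moreover have "u *\<^sub>R (G1 w1 + c0) + v *\<^sub>R (G1 w2 + c0) = G1 (u *\<^sub>R w1 + v *\<^sub>R w2) + c0"
      using uv by (simp add: blinfun.add_right blinfun.scaleR_right algebra_simps scaleR_add_left[symmetric])
    moreover have "- (u *\<^sub>R b0) - v *\<^sub>R b0 = - b0"
    proof -
      have "- (u *\<^sub>R b0) - v *\<^sub>R b0 = - ((u + v) *\<^sub>R b0)" by (simp add: scaleR_add_left)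
      thus ?thesis using uv by simp
    qed
    ultimately have "u *\<^sub>R w1 + v *\<^sub>R w2 \<in> W"
      using w uv by (simp add: W_def blinfun.add_right blinfun.scaleR_right scaleR_add_left[symmetric])
    moreover have "u *\<^sub>R x + v *\<^sub>R y = I1 (u *\<^sub>R w1 + v *\<^sub>R w2) + a0"
      using w uv by (simp add: blinfun.add_right blinfun.scaleR_right algebra_simps scaleR_add_left[symmetric])
    ultimately show "u *\<^sub>R x + v *\<^sub>R y \<in> Sa" unfolding Sa_def by blast
  qed
  have cNn: "convex Nn"
    unfolding convex_def Nn_def
  proof (intro ballI allI impI CollectI)
    fix x y :: "real^'m" and u v :: real and i
    assume x: "x \<in> {x. \<forall>i. x $ i < 0}" and y: "y \<in> {x. \<forall>i. x $ i < 0}" and uv0: "0 \<le> u" "0 \<le> v" "u + v = 1"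
    have uv: "0 \<le> u \<and> 0 \<le> v \<and> u + v = 1" using uv0 by simp
    have "x $ i < 0" "y $ i < 0" using x y by auto
    hence "u * x $ i \<le> 0" "v * y $ i \<le> 0" "u * x $ i < 0 \<or> v * y $ i < 0"
      using uv by (auto simp: mult_nonneg_nonpos mult_pos_neg) (metis add_cancel_left_left linorder_neqE_linordered_idom mult_pos_neg not_less zero_neq_one)
    thus "(u *\<^sub>R x + v *\<^sub>R y) $ i < 0" by auto
  qed
  have one: "- vec 1 \<in> Nn" by (simp add: Nn_def)
  have disj: "Nn \<inter> Sa = {}"
  proof (rule ccontr)
    assume "Nn \<inter> Sa \<noteq> {}"
    then obtain w where "w \<in> W" "\<forall>i. (I1 w + a0) $ i < 0" by (auto simp: Nn_def Sa_def)
    thus False using primal by (auto simp: W_def)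
  qed
  obtain a b where ab: "a \<noteq> 0" "\<And>x. x \<in> Nn \<Longrightarrow> a \<bullet> x \<le> b" "\<And>x. x \<in> Sa \<Longrightarrow> b \<le> a \<bullet> x"
    using separating_hyperplane_sets[OF cNn cSa _ _ disj] one w0W unfolding Sa_def by blast
  have b0': "b \<ge> 0"
  proof (rule ccontr)
    assume "\<not> b \<ge> 0"
    define k where "k = (- b) / (\<bar>a \<bullet> vec 1\<bar> + 1)"
    have k: "k > 0" unfolding k_def using \<open>\<not> b \<ge> 0\<close> by (intro divide_pos_pos) auto
    have "(- k) *\<^sub>R vec 1 \<in> Nn" using k by (simp add: Nn_def)
    hence "a \<bullet> ((- k) *\<^sub>R vec 1) \<le> b" by (rule ab(2))
    moreover have "k * (\<bar>a \<bullet> vec 1\<bar> + 1) = - b" by (simp add: k_def)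
    moreover have "k * (a \<bullet> vec 1) \<le> k * \<bar>a \<bullet> vec 1\<bar>" using k by (intro mult_left_mono) auto
    ultimately show False using k by (simp add: algebra_simps)
  qed
  have apos: "a $ i \<ge> 0" for i
  proof (rule ccontr)
    assume ai: "\<not> a $ i \<ge> 0"
    define K where "K = (b + \<bar>a \<bullet> vec 1\<bar> + 1) / (- a $ i)"
    have K: "K > 0" unfolding K_def using ai b0' by (intro divide_pos_pos) auto
    have "- vec 1 - K *\<^sub>R axis i 1 \<in> Nn" using K by (simp add: Nn_def axis_def)
    hence "a \<bullet> (- vec 1 - K *\<^sub>R axis i 1) \<le> b" by (rule ab(2))
    moreover have "a \<bullet> (- vec 1 - K *\<^sub>R axis i 1) = - (a \<bullet> vec 1) - K * a $ i"
    proof -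
      have ax: "a \<bullet> axis i 1 = a $ i" by (simp add: inner_axis)
      show ?thesis by (simp add: inner_diff_right ax)
    qed
    moreover have "K * a $ i = - (b + \<bar>a \<bullet> vec 1\<bar> + 1)" using ai by (simp add: K_def)
    ultimately show False using abs_ge_self[of "a \<bullet> vec 1"] by linarith
  qed
  define lam where "lam = a /\<^sub>R norm a"
  have na: "norm a > 0" using ab(1) by simp
  have lam_pos: "\<forall>i. lam $ i \<ge> 0" using apos na by (simp add: lam_def)
  have lam_norm: "norm lam = 1" using na by (simp add: lam_def)
  have hl: "lam \<bullet> (I1 w + a0) \<ge> 0" if "w \<in> W" for w
  proof -
    have "b \<le> a \<bullet> (I1 w + a0)" using ab(3) that by (auto simp: Sa_def)
    thus ?thesis using na b0' by (simp add: lam_def)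
  qed
  have P1: "lam \<bullet> I1 h \<ge> 0" if h: "F1 h = 0" "G1 h \<in> ?K" for h
  proof (rule ccontr)
    assume neg: "\<not> lam \<bullet> I1 h \<ge> 0"
    define X where "X = lam \<bullet> (I1 w0 + a0)"
    define k where "k = (\<bar>X\<bar> + 1) / (- (lam \<bullet> I1 h))"
    have k: "k > 0" unfolding k_def using neg by (intro divide_pos_pos) auto
    have "G1 (w0 + k *\<^sub>R h) + c0 = k *\<^sub>R G1 h" using w0 by (simp add: blinfun.add_right blinfun.scaleR_right)
    hence "w0 + k *\<^sub>R h \<in> W" using w0 h k cone_scale[OF Q(1) h(2) k]
      by (simp add: W_def blinfun.add_right blinfun.scaleR_right)
    hence "lam \<bullet> (I1 (w0 + k *\<^sub>R h) + a0) \<ge> 0" by (rule hl)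
    moreover have "lam \<bullet> (I1 (w0 + k *\<^sub>R h) + a0) = X + k * (lam \<bullet> I1 h)"
      by (simp add: X_def blinfun.add_right blinfun.scaleR_right inner_add_right algebra_simps)
    moreover have "k * (lam \<bullet> I1 h) = - (\<bar>X\<bar> + 1)" using neg by (simp add: k_def)
    ultimately show False by linarith
  qed
  have P2: "lam \<bullet> I1 h = 0" if "F1 h = 0" "G1 h = 0" for h
  proof -
    have "lam \<bullet> I1 h \<ge> 0" using P1 that cone_zero[OF Q(2)] by simp
    moreover have "lam \<bullet> I1 (- h) \<ge> 0" using P1[of "- h"] that cone_zero[OF Q(2)] by (simp add: blinfun.minus_right)
    ultimately show ?thesis by (simp add: blinfun.minus_right)
  qed
  have linA: "bounded_linear (\<lambda>h. (F1 h, G1 h))"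
    by (intro bounded_linear_Pair blinfun.bounded_linear_right)
  have lin\<phi>: "bounded_linear (\<lambda>h. - (lam \<bullet> I1 h))"
    by (intro bounded_linear_minus bounded_linear_compose[OF bounded_linear_inner_right blinfun.bounded_linear_right])
  obtain L :: "('e0 \<times> 'e) \<Rightarrow>\<^sub>L real" where L: "\<And>h. - (lam \<bullet> I1 h) = L (F1 h, G1 h)"
  proof -
    have "\<exists>L :: ('e0 \<times> 'e) \<Rightarrow>\<^sub>L real. \<forall>h. - (lam \<bullet> I1 h) = L (F1 h, G1 h)"
    proof (rule factor_functional[OF linA C _ lin\<phi>])
      fix y :: "'e0 \<times> 'e"
      show "\<exists>x. (F1 x, G1 x) = y \<and> norm x \<le> C * norm y" using openA[of "fst y" "snd y"] by (metis prod.collapse)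
    next
      fix x assume "(F1 x, G1 x) = 0" thus "- (lam \<bullet> I1 x) = 0" using P2 by (simp add: zero_prod_def)
    qed
    thus ?thesis using that by blast
  qed
  have lin1: "bounded_linear (\<lambda>a. L (a, 0))"
    by (rule bounded_linear_compose[OF blinfun.bounded_linear_right bounded_linear_Pair[OF bounded_linear_ident bounded_linear_zero]])
  have lin2: "bounded_linear (\<lambda>y. L (0, y))"
    by (rule bounded_linear_compose[OF blinfun.bounded_linear_right bounded_linear_Pair[OF bounded_linear_zero bounded_linear_ident]])
  define v where "v = Blinfun (\<lambda>a. L (a, 0))"
  define e where "e = Blinfun (\<lambda>y. L (0, y))"
  have v: "v a = L (a, 0)" for a by (simp add: v_def bounded_linear_Blinfun_apply[OF lin1])
  have e: "e y = L (0, y)" for y by (simp add: e_def bounded_linear_Blinfun_apply[OF lin2])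
  have Lsplit: "L (a, y) = v a + e y" for a y
  proof -
    have "(a, y) = (a, 0) + (0, y)" by simp
    hence "L (a, y) = L (a, 0) + L (0, y)" by (metis blinfun.add_right)
    thus ?thesis by (simp add: v e)
  qed
  have lag: "\<forall>h. lam \<bullet> I1 h + v (F1 h) + e (G1 h) = 0"
    using L Lsplit by (metis add.assoc add.right_inverse)
  have nc: "e \<in> normal_cone_cvx Q g"
    unfolding normal_cone_cvx_def
  proof (intro CollectI ballI)
    fix q assume q: "q \<in> Q"
    obtain h where h: "F1 h = 0" "G1 h = q - g" using openA by blast
    have "lam \<bullet> I1 h \<ge> 0" using P1 h cone_self[OF q] by simp
    moreover have "e (q - g) = - (lam \<bullet> I1 h)" using L[of h] h by (simp add: e)
    ultimately show "e (q - g) \<le> 0" by simp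
  qed
  have so: "lam \<bullet> a0 + v b0 + e c0 \<ge> 0"
  proof -
    have "lam \<bullet> (I1 w0 + a0) \<ge> 0" by (rule hl[OF w0W])
    moreover have "- (lam \<bullet> I1 w0) = L (- b0, - c0)" using L[of w0] w0 by simp
    moreover have "L (- b0, - c0) = - L (b0, c0)"
    proof -
      have "L (- b0, - c0) = L (- (b0, c0))" by simp
      also have "\<dots> = - L (b0, c0)" by (rule blinfun.minus_right)
      finally show ?thesis .
    qed
    ultimately show ?thesis using Lsplit[of b0 c0] by (simp add: inner_add_right)
  qed
  have "(lam, v, e) \<in> Lambda2 I1 F1 G1 Q g"
    using lam_pos lam_norm lag nc by (simp add: Lambda2_def)
  with so show ?thesis by (intro bexI[of _ "(lam, v, e)"]) simp_all
qed



lemma split_blinfun: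
  fixes L :: "('a::real_normed_vector \<times> 'b::real_normed_vector) \<Rightarrow>\<^sub>L real"
  shows "\<exists>v e. \<forall>x y. L (x, y) = blinfun_apply v x + blinfun_apply e y"
proof -
  have lin1: "bounded_linear (\<lambda>a. L (a, 0))"
    by (rule bounded_linear_compose[OF blinfun.bounded_linear_right bounded_linear_Pair[OF bounded_linear_ident bounded_linear_zero]])
  have lin2: "bounded_linear (\<lambda>y. L (0, y))"
    by (rule bounded_linear_compose[OF blinfun.bounded_linear_right bounded_linear_Pair[OF bounded_linear_zero bounded_linear_ident]])
  have "L (x, y) = Blinfun (\<lambda>a. L (a, 0)) x + Blinfun (\<lambda>y. L (0, y)) y" for x y
  proof -
    have "(x, y) = (x, 0) + (0, y)" by simp
    hence "L (x, y) = L (x, 0) + L (0, y)" by (metis blinfun.add_right)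
    thus ?thesis unfolding bounded_linear_Blinfun_apply[OF lin1] bounded_linear_Blinfun_apply[OF lin2] .
  qed
  thus ?thesis by blast
qed

lemma mult_diff_bound:
  fixes I1 :: "'z::real_normed_vector \<Rightarrow>\<^sub>L (real^'m::finite)" and F1 :: "'z \<Rightarrow>\<^sub>L 'e0::real_normed_vector"
    and G1 :: "'z \<Rightarrow>\<^sub>L 'e::real_normed_vector"
  assumes C: "C \<ge> 0" and openA: "\<And>a y. \<exists>h. F1 h = a \<and> G1 h = y \<and> norm h \<le> C * norm (a, y)"
    and l1: "\<forall>h. l1 \<bullet> I1 h + blinfun_apply v1 (F1 h) + blinfun_apply e1 (G1 h) = 0"
    and l2: "\<forall>h. l2 \<bullet> I1 h + blinfun_apply v2 (F1 h) + blinfun_apply e2 (G1 h) = 0"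
  shows "norm (e1 - e2) \<le> C * norm I1 * norm (l1 - l2)" "norm (v1 - v2) \<le> C * norm I1 * norm (l1 - l2)"
proof -
  have key: "\<bar>(l1 - l2) \<bullet> I1 h\<bar> \<le> C * norm I1 * norm (l1 - l2) * norm (a, y)"
    if h: "norm h \<le> C * norm (a, y)" for h a y
  proof -
    have "\<bar>(l1 - l2) \<bullet> I1 h\<bar> \<le> norm (l1 - l2) * norm (I1 h)" by (rule Cauchy_Schwarz_ineq2)
    also have "\<dots> \<le> norm (l1 - l2) * (norm I1 * norm h)" by (intro mult_left_mono norm_blinfun) auto
    also have "\<dots> \<le> norm (l1 - l2) * (norm I1 * (C * norm (a, y)))" using h by (intro mult_left_mono) auto
    finally show ?thesis by (simp add: algebra_simps)
  qed
  show "norm (e1 - e2) \<le> C * norm I1 * norm (l1 - l2)"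
  proof (rule norm_blinfun_bound)
    show "0 \<le> C * norm I1 * norm (l1 - l2)" using C by simp
    fix y
    obtain h where h: "F1 h = 0" "G1 h = y" "norm h \<le> C * norm (0::'e0, y)" using openA by blast
    have "e1 y = - (l1 \<bullet> I1 h)" using l1[rule_format, of h] h by (simp add: eq_neg_iff_add_eq_0 add.commute)
    moreover have "e2 y = - (l2 \<bullet> I1 h)" using l2[rule_format, of h] h by (simp add: eq_neg_iff_add_eq_0 add.commute)
    ultimately have "blinfun_apply (e1 - e2) y = - ((l1 - l2) \<bullet> I1 h)"
      by (simp add: blinfun.diff_left inner_diff_left)
    hence "norm (blinfun_apply (e1 - e2) y) = \<bar>(l1 - l2) \<bullet> I1 h\<bar>" by simp
    also have "\<dots> \<le> C * norm I1 * norm (l1 - l2) * norm (0::'e0, y)" by (rule key[OF h(3)])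
    finally show "norm (blinfun_apply (e1 - e2) y) \<le> C * norm I1 * norm (l1 - l2) * norm y"
      by (simp add: norm_Pair)
  qed
  show "norm (v1 - v2) \<le> C * norm I1 * norm (l1 - l2)"
  proof (rule norm_blinfun_bound)
    show "0 \<le> C * norm I1 * norm (l1 - l2)" using C by simp
    fix a
    obtain h where h: "F1 h = a" "G1 h = 0" "norm h \<le> C * norm (a, 0::'e)" using openA by blast
    have "v1 a = - (l1 \<bullet> I1 h)" using l1[rule_format, of h] h by (simp add: eq_neg_iff_add_eq_0 add.commute)
    moreover have "v2 a = - (l2 \<bullet> I1 h)" using l2[rule_format, of h] h by (simp add: eq_neg_iff_add_eq_0 add.commute)
    ultimately have "blinfun_apply (v1 - v2) a = - ((l1 - l2) \<bullet> I1 h)"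
      by (simp add: blinfun.diff_left inner_diff_left)
    hence "norm (blinfun_apply (v1 - v2) a) = \<bar>(l1 - l2) \<bullet> I1 h\<bar>" by simp
    also have "\<dots> \<le> C * norm I1 * norm (l1 - l2) * norm (a, 0::'e)" by (rule key[OF h(3)])
    finally show "norm (blinfun_apply (v1 - v2) a) \<le> C * norm I1 * norm (l1 - l2) * norm a"
      by (simp add: norm_Pair)
  qed
qed



lemma closure_limit:
  fixes I1 :: "'z::real_normed_vector \<Rightarrow>\<^sub>L (real^'m::finite)" and F1 :: "'z \<Rightarrow>\<^sub>L 'e0::real_normed_vector"
    and G1 :: "'z \<Rightarrow>\<^sub>L 'e::real_normed_vector"
    and qI :: "'z \<Rightarrow> real^'m" and qF :: "'z \<Rightarrow> 'e0" and qG :: "'z \<Rightarrow> 'e"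
  assumes C: "C \<ge> 0" and openA: "\<And>a y. \<exists>h. F1 h = a \<and> G1 h = y \<and> norm h \<le> C * norm (a, y)"
    and cI: "\<And>x. isCont qI x" and cF: "\<And>x. isCont qF x" and cG: "\<And>x. isCont qG x"
    and X: "\<And>d. d \<in> X \<Longrightarrow> \<exists>(lam, v, e) \<in> Lambda2 I1 F1 G1 Q g.
              lam \<bullet> qI d + blinfun_apply v (qF d) + blinfun_apply e (qG d) \<ge> 0"
    and d: "d \<in> closure X"
  shows "\<exists>(lam, v, e) \<in> Lambda2 I1 F1 G1 Q g. lam \<bullet> qI d + blinfun_apply v (qF d) + blinfun_apply e (qG d) \<ge> 0"
proof -
  obtain ds where ds: "\<And>n. ds n \<in> X" "ds \<longlonglongrightarrow> d" using d unfolding closure_sequential by blast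
  have "\<forall>n. \<exists>M. M \<in> Lambda2 I1 F1 G1 Q g \<and>
          fst M \<bullet> qI (ds n) + blinfun_apply (fst (snd M)) (qF (ds n)) + blinfun_apply (snd (snd M)) (qG (ds n)) \<ge> 0"
  proof
    fix n
    obtain lam v e where "(lam, v, e) \<in> Lambda2 I1 F1 G1 Q g"
       "lam \<bullet> qI (ds n) + blinfun_apply v (qF (ds n)) + blinfun_apply e (qG (ds n)) \<ge> 0"
      using X[OF ds(1)[of n]] by blast
    thus "\<exists>M. M \<in> Lambda2 I1 F1 G1 Q g \<and>
          fst M \<bullet> qI (ds n) + blinfun_apply (fst (snd M)) (qF (ds n)) + blinfun_apply (snd (snd M)) (qG (ds n)) \<ge> 0"
      by (intro exI[of _ "(lam, v, e)"]) simp
  qed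
  then obtain M where M: "\<And>n. M n \<in> Lambda2 I1 F1 G1 Q g"
     "\<And>n. fst (M n) \<bullet> qI (ds n) + blinfun_apply (fst (snd (M n))) (qF (ds n)) + blinfun_apply (snd (snd (M n))) (qG (ds n)) \<ge> 0"
    by metis
  define ln where "ln n = fst (M n)" for n
  define vn where "vn n = fst (snd (M n))" for n
  define en where "en n = snd (snd (M n))" for n
  have Mn: "\<forall>i. ln n $ i \<ge> 0" "norm (ln n) = 1"
      "\<forall>h. ln n \<bullet> I1 h + vn n (F1 h) + en n (G1 h) = 0" "en n \<in> normal_cone_cvx Q g"
      "ln n \<bullet> qI (ds n) + vn n (qF (ds n)) + en n (qG (ds n)) \<ge> 0" for n
    using M[of n] by (auto simp: Lambda2_def ln_def vn_def en_def split: prod.splits)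
  have "seq_compact (sphere (0::real^'m) 1)" by (rule compact_imp_seq_compact) simp
  moreover have "\<forall>n. ln n \<in> sphere 0 1" using Mn by simp
  ultimately obtain l r where lr: "l \<in> sphere 0 1" "strict_mono r" "(ln \<circ> r) \<longlonglongrightarrow> l"
    by (rule seq_compactE)
  have lr': "(\<lambda>n. ln (r n)) \<longlonglongrightarrow> l" using lr(3) by (simp add: comp_def)
  have lpos: "\<forall>i. l $ i \<ge> 0"
  proof
    fix i
    have "(\<lambda>n. ln (r n) $ i) \<longlonglongrightarrow> l $ i" using lr' by (intro tendsto_intros)
    thus "l $ i \<ge> 0" by (rule LIMSEQ_le_const) (use Mn in auto)
  qed
  have lnorm: "norm l = 1" using lr(1) by simp
  have ker: "- (l \<bullet> I1 h) = 0" if "(F1 h, G1 h) = 0" for h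
  proof -
    have h: "F1 h = 0" "G1 h = 0" using that by (auto simp: zero_prod_def)
    have "(\<lambda>n. ln (r n) \<bullet> I1 h) \<longlonglongrightarrow> l \<bullet> I1 h" using lr' by (intro tendsto_intros)
    moreover have "ln (r n) \<bullet> I1 h = 0" for n using spec[OF Mn(3)[of "r n"], of h] h by simp
    hence "(\<lambda>n. ln (r n) \<bullet> I1 h) \<longlonglongrightarrow> 0" by simp
    ultimately have "l \<bullet> I1 h = 0" by (rule LIMSEQ_unique)
    thus ?thesis by simp
  qed
  have linA: "bounded_linear (\<lambda>h. (F1 h, G1 h))"
    by (intro bounded_linear_Pair blinfun.bounded_linear_right)
  have lin\<phi>: "bounded_linear (\<lambda>h. - (l \<bullet> I1 h))"
    by (intro bounded_linear_minus bounded_linear_compose[OF bounded_linear_inner_right blinfun.bounded_linear_right])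
  obtain L :: "('e0 \<times> 'e) \<Rightarrow>\<^sub>L real" where L: "\<forall>h. - (l \<bullet> I1 h) = L (F1 h, G1 h)"
  proof -
    have "\<exists>L :: ('e0 \<times> 'e) \<Rightarrow>\<^sub>L real. \<forall>h. - (l \<bullet> I1 h) = L (F1 h, G1 h)"
    proof (rule factor_functional[OF linA C _ lin\<phi>])
      fix y :: "'e0 \<times> 'e"
      show "\<exists>x. (F1 x, G1 x) = y \<and> norm x \<le> C * norm y" using openA[of "fst y" "snd y"] by (metis prod.collapse)
    qed (rule ker)
    thus ?thesis using that by blast
  qed
  obtain v e where ve: "\<And>x y. L (x, y) = blinfun_apply v x + blinfun_apply e y" using split_blinfun by blast
  have lag: "\<forall>h. l \<bullet> I1 h + v (F1 h) + e (G1 h) = 0"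
  proof
    fix h show "l \<bullet> I1 h + v (F1 h) + e (G1 h) = 0" using L ve[of "F1 h" "G1 h"] by (metis add.assoc add.right_inverse)
  qed
  define K where "K = C * norm I1"
  have bnd: "norm (en (r n) - e) \<le> K * norm (ln (r n) - l)" "norm (vn (r n) - v) \<le> K * norm (ln (r n) - l)" for n
    using mult_diff_bound[OF C openA Mn(3)[of "r n"] lag] by (simp_all add: K_def)
  have l0: "(\<lambda>n. K * norm (ln (r n) - l)) \<longlonglongrightarrow> 0"
  proof -
    have "(\<lambda>n. ln (r n) - l) \<longlonglongrightarrow> 0" using lr' by (simp add: LIM_zero)
    hence "(\<lambda>n. norm (ln (r n) - l)) \<longlonglongrightarrow> 0" by (simp add: tendsto_norm_zero)
    thus ?thesis by (metis mult_zero_right tendsto_mult_left)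
  qed
  have en: "(\<lambda>n. en (r n)) \<longlonglongrightarrow> e"
    by (rule LIM_zero_cancel, rule Lim_null_comparison[OF _ l0]) (use bnd in auto)
  have vn: "(\<lambda>n. vn (r n)) \<longlonglongrightarrow> v"
    by (rule LIM_zero_cancel, rule Lim_null_comparison[OF _ l0]) (use bnd in auto)
  have nc: "e \<in> normal_cone_cvx Q g"
    unfolding normal_cone_cvx_def
  proof (intro CollectI ballI)
    fix q assume q: "q \<in> Q"
    have "(\<lambda>n. blinfun_apply (en (r n)) (q - g)) \<longlonglongrightarrow> blinfun_apply e (q - g)" using en by (intro tendsto_intros)
    thus "blinfun_apply e (q - g) \<le> 0"
      by (rule LIMSEQ_le_const2) (use Mn(4) q in \<open>auto simp: normal_cone_cvx_def\<close>)
  qed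
  have dr: "(\<lambda>n. ds (r n)) \<longlonglongrightarrow> d" using LIMSEQ_subseq_LIMSEQ[OF ds(2) lr(2)] by (simp add: comp_def)
  have "(\<lambda>n. ln (r n) \<bullet> qI (ds (r n)) + vn (r n) (qF (ds (r n))) + en (r n) (qG (ds (r n))))
        \<longlonglongrightarrow> l \<bullet> qI d + v (qF d) + e (qG d)"
    using lr' vn en isCont_tendsto_compose[OF cI dr] isCont_tendsto_compose[OF cF dr] isCont_tendsto_compose[OF cG dr]
    by (intro tendsto_intros)
  hence so: "l \<bullet> qI d + v (qF d) + e (qG d) \<ge> 0"
    by (rule LIMSEQ_le_const) (use Mn(5) in auto)
  have "(l, v, e) \<in> Lambda2 I1 F1 G1 Q g" using lpos lnorm lag nc by (simp add: Lambda2_def)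
  with so show ?thesis by (intro bexI[of _ "(l, v, e)"]) simp_all
qed



lemma conv3:
  assumes Q: "convex Q" "g \<in> Q" "q \<in> Q" "q' \<in> Q" and ab: "\<alpha> \<ge> 0" "\<beta> \<ge> 0" "\<alpha> + \<beta> \<le> 1"
  shows "g + \<alpha> *\<^sub>R (q - g) + \<beta> *\<^sub>R (q' - g) \<in> Q"
proof (cases "\<alpha> + \<beta> = 0")
  case True
  hence "\<alpha> = 0" "\<beta> = 0" using ab by auto
  thus ?thesis using Q by simp
next
  case False
  hence s: "\<alpha> + \<beta> > 0" using ab by simp
  define p where "p = (\<alpha> / (\<alpha> + \<beta>)) *\<^sub>R q + (\<beta> / (\<alpha> + \<beta>)) *\<^sub>R q'"
  have "p \<in> Q" unfolding p_def using Q ab s by (intro convexD) (auto simp: add_divide_distrib[symmetric])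
  hence "(1 - (\<alpha> + \<beta>)) *\<^sub>R g + (\<alpha> + \<beta>) *\<^sub>R p \<in> Q" using Q ab s by (intro convexD) auto
  moreover have "(\<alpha> + \<beta>) *\<^sub>R p = \<alpha> *\<^sub>R q + \<beta> *\<^sub>R q'" using s by (simp add: p_def scaleR_add_right)
  ultimately show ?thesis by (simp add: algebra_simps)
qed

lemma tangent_ker:
  fixes F :: "'a::real_normed_vector \<Rightarrow> 'b::real_normed_vector"
  assumes der: "(F has_derivative blinfun_apply F1) (at z0)" and F0: "F z0 = 0"
    and k: "k \<in> contingent_cone {z. F z = 0} z0"
  shows "F1 k = 0"
proof -
  obtain t hs where th: "\<And>n. t n > 0" "t \<longlonglongrightarrow> 0" "hs \<longlonglongrightarrow> k" "\<And>n. F (z0 + t n *\<^sub>R hs n) = 0"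
    using k unfolding contingent_cone_def by blast
  have bnd: "norm (F1 k) \<le> \<epsilon> * norm k" if \<epsilon>: "\<epsilon> > 0" for \<epsilon>
  proof -
    obtain \<delta> where \<delta>: "\<delta> > 0" "\<And>y. norm (y - z0) < \<delta> \<Longrightarrow> norm (F y - F z0 - F1 (y - z0)) \<le> \<epsilon> * norm (y - z0)"
      using der \<epsilon> unfolding has_derivative_at_alt by blast
    have "(\<lambda>n. t n *\<^sub>R hs n) \<longlonglongrightarrow> 0 *\<^sub>R k" using th by (intro tendsto_intros)
    hence "\<forall>\<^sub>F n in sequentially. norm (t n *\<^sub>R hs n) < \<delta>"
      using \<delta>(1) by (simp add: tendsto_norm_zero_iff[symmetric] order_tendsto_iff)
    hence ev: "\<forall>\<^sub>F n in sequentially. norm (F1 (hs n)) \<le> \<epsilon> * norm (hs n)"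
    proof (rule eventually_mono)
      fix n assume n: "norm (t n *\<^sub>R hs n) < \<delta>"
      have "norm (F (z0 + t n *\<^sub>R hs n) - F z0 - F1 ((z0 + t n *\<^sub>R hs n) - z0)) \<le> \<epsilon> * norm ((z0 + t n *\<^sub>R hs n) - z0)"
        using \<delta>(2)[of "z0 + t n *\<^sub>R hs n"] n by simp
      hence "t n * norm (F1 (hs n)) \<le> t n * (\<epsilon> * norm (hs n))"
        using th(1)[of n] th(4)[of n] F0 by (simp add: blinfun.scaleR_right)
      thus "norm (F1 (hs n)) \<le> \<epsilon> * norm (hs n)" using th(1)[of n] by simp
    qed
    show ?thesis
      by (rule tendsto_le[OF trivial_limit_sequentially _ _ ev]) (intro tendsto_intros th(3))+
  qed
  show ?thesis
  proof (rule ccontr)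
    assume ne: "F1 k \<noteq> 0"
    hence nk: "norm k > 0" by (metis blinfun.zero_right zero_less_norm_iff)
    have "norm (F1 k) / (2 * norm k) > 0" using ne nk by simp
    hence "norm (F1 k) \<le> (norm (F1 k) / (2 * norm k)) * norm k" by (rule bnd)
    also have "\<dots> = norm (F1 k) / 2" using nk by simp
    finally show False using ne by simp
  qed
qed



lemma primal:
  fixes I :: "'z::banach \<Rightarrow> real^'m::finite" and F :: "'z \<Rightarrow> 'e0::banach" and G :: "'z \<Rightarrow> 'e::banach"
    and I1 :: "'z \<Rightarrow> 'z \<Rightarrow>\<^sub>L (real^'m)" and I2 :: "'z \<Rightarrow> 'z \<Rightarrow>\<^sub>L 'z \<Rightarrow>\<^sub>L (real^'m)"
    and F1 :: "'z \<Rightarrow> 'z \<Rightarrow>\<^sub>L 'e0" and F2 :: "'z \<Rightarrow> 'z \<Rightarrow>\<^sub>L 'z \<Rightarrow>\<^sub>L 'e0"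
    and G1 :: "'z \<Rightarrow> 'z \<Rightarrow>\<^sub>L 'e" and G2 :: "'z \<Rightarrow> 'z \<Rightarrow>\<^sub>L 'z \<Rightarrow>\<^sub>L 'e"
  assumes S: "open S" "z0 \<in> S"
    and dI: "\<And>z. z \<in> S \<Longrightarrow> (I has_derivative blinfun_apply (I1 z)) (at z)" "(I1 has_derivative blinfun_apply (I2 z0)) (at z0)"
    and dF: "\<And>z. z \<in> S \<Longrightarrow> (F has_derivative blinfun_apply (F1 z)) (at z)" "(F1 has_derivative blinfun_apply (F2 z0)) (at z0)"
    and dG: "\<And>z. z \<in> S \<Longrightarrow> (G has_derivative blinfun_apply (G1 z)) (at z)" "(G1 has_derivative blinfun_apply (G2 z0)) (at z0)"
    and Q: "convex Q" "G z0 \<in> Q" and F0: "F z0 = 0"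
    and C: "C > 0" and openA: "\<And>a y. \<exists>h. F1 z0 h = a \<and> G1 z0 h = y \<and> norm h \<le> C * norm (a, y)"
    and e0: "\<epsilon>0 > 0" and opt: "\<And>z. F z = 0 \<Longrightarrow> G z \<in> Q \<Longrightarrow> norm (z - z0) \<le> \<epsilon>0 \<Longrightarrow> \<not> (\<forall>i. (I z - I z0) $ i < 0)"
    and d1: "\<forall>i. (I1 z0 d) $ i \<le> 0" and d2: "F1 z0 d = 0" and d3: "G1 z0 d \<in> cone_of_diff Q (G z0)"
    and w1: "F1 z0 w = - F2 z0 d d" and w2: "G1 z0 w + G2 z0 d d \<in> cone_of_diff Q (G z0)"
    and w3: "\<forall>i. (I1 z0 w + I2 z0 d d) $ i < 0"
  shows False
proof -
  define g where "g = G z0"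
  obtain q \<mu> where q: "G1 z0 d = \<mu> *\<^sub>R (q - g)" "q \<in> Q" "\<mu> > 0" using d3 unfolding cone_of_diff_def g_def by blast
  obtain q' \<nu> where q': "G1 z0 w + G2 z0 d d = \<nu> *\<^sub>R (q' - g)" "q' \<in> Q" "\<nu> > 0" using w2 unfolding cone_of_diff_def g_def by blast
  define P where "P = I1 z0 w + I2 z0 d d"
  define \<eta> where "\<eta> = Min (range (\<lambda>i. - P $ i))"
  have \<eta>: "\<eta> > 0" "\<And>i. P $ i \<le> - \<eta>"
  proof -
    have fin: "finite (range (\<lambda>i. - P $ i))" by simp
    have "\<forall>i. P $ i < 0" using w3 by (simp add: P_def)
    thus "\<eta> > 0" unfolding \<eta>_def using fin by (subst Min_gr_iff) auto
    fix i have "\<eta> \<le> - P $ i" unfolding \<eta>_def by (rule Min_le[OF fin]) simp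
    thus "P $ i \<le> - \<eta>" by simp
  qed
  have cI: "isCont I1 z0" using has_derivative_continuous[OF dI(2)] by simp
  have cF: "isCont F1 z0" using has_derivative_continuous[OF dF(2)] by simp
  have cG: "isCont G1 z0" using has_derivative_continuous[OF dG(2)] by simp
  obtain \<rho>F where \<rho>F: "\<rho>F > 0" "\<And>z z'. z \<in> cball z0 \<rho>F \<Longrightarrow> z' \<in> cball z0 \<rho>F \<Longrightarrow>
      norm (F z - F z' - F1 z0 (z - z')) \<le> (1/(4*C)) * norm (z - z')"
    using strict_diff[where f=F and ?f1.0=F1, OF S dF(1) cF, of "1/(4*C)"] C by auto
  obtain \<rho>G where \<rho>G: "\<rho>G > 0" "\<And>z z'. z \<in> cball z0 \<rho>G \<Longrightarrow> z' \<in> cball z0 \<rho>G \<Longrightarrow>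
      norm (G z - G z' - G1 z0 (z - z')) \<le> (1/(4*C)) * norm (z - z')"
    using strict_diff[where f=G and ?f1.0=G1, OF S dG(1) cG, of "1/(4*C)"] C by auto
  obtain \<rho>I where \<rho>I: "\<rho>I > 0" "\<And>z z'. z \<in> cball z0 \<rho>I \<Longrightarrow> z' \<in> cball z0 \<rho>I \<Longrightarrow>
      norm (I z - I z' - I1 z0 (z - z')) \<le> 1 * norm (z - z')"
    using strict_diff[where f=I and ?f1.0=I1, OF S dI(1) cI, of 1] by auto
  define LI where "LI = norm (I1 z0) + 1"
  have LI: "LI > 0" by (simp add: LI_def add_nonneg_pos)
  have lipI: "norm (I z - I z') \<le> LI * norm (z - z')" if "z \<in> cball z0 \<rho>I" "z' \<in> cball z0 \<rho>I" for z z'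
  proof -
    have "I z - I z' = (I z - I z' - I1 z0 (z - z')) + I1 z0 (z - z')" by simp
    hence "norm (I z - I z') \<le> norm (I z - I z' - I1 z0 (z - z')) + norm (I1 z0 (z - z'))"
      by (metis norm_triangle_ineq)
    also have "\<dots> \<le> 1 * norm (z - z') + norm (I1 z0) * norm (z - z')"
      using \<rho>I(2)[OF that] norm_blinfun[of "I1 z0" "z - z'"] by linarith
    finally show ?thesis by (simp add: LI_def algebra_simps)
  qed
  define r where "r = min \<rho>F \<rho>G"
  have r: "r > 0" using \<rho>F \<rho>G by (simp add: r_def)
  define \<Phi> where "\<Phi> z = (F z, G z)" for z
  define A where "A h = (F1 z0 h, G1 z0 h)" for h
  have linA: "bounded_linear A" unfolding A_def by (intro bounded_linear_Pair blinfun.bounded_linear_right)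
  have openA': "\<exists>x. A x = y \<and> norm x \<le> C * norm y" for y
    using openA[of "fst y" "snd y"] unfolding A_def by (metis prod.collapse)
  have strictPhi: "norm (\<Phi> z - \<Phi> z' - A (z - z')) \<le> (1/(2*C)) * norm (z - z')"
    if "z \<in> cball z0 r" "z' \<in> cball z0 r" for z z'
  proof -
    have zF: "z \<in> cball z0 \<rho>F" "z' \<in> cball z0 \<rho>F" and zG: "z \<in> cball z0 \<rho>G" "z' \<in> cball z0 \<rho>G"
      using that by (auto simp: r_def)
    have "\<Phi> z - \<Phi> z' - A (z - z') = (F z - F z' - F1 z0 (z - z'), G z - G z' - G1 z0 (z - z'))"
      by (simp add: \<Phi>_def A_def)
    hence "norm (\<Phi> z - \<Phi> z' - A (z - z')) \<le> norm (F z - F z' - F1 z0 (z - z')) + norm (G z - G z' - G1 z0 (z - z'))"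
      by (simp add: norm_Pair_le)
    also have "\<dots> \<le> (1/(4*C)) * norm (z - z') + (1/(4*C)) * norm (z - z')"
      using \<rho>F(2)[OF zF] \<rho>G(2)[OF zG] by linarith
    finally show ?thesis by simp
  qed
  define \<tau>1 where "\<tau>1 = \<eta> / (32 * C * LI)"
  have \<tau>1: "\<tau>1 > 0" using \<eta> C LI by (simp add: \<tau>1_def)
  define \<tau>I where "\<tau>I = \<eta> / 8"
  have \<tau>I: "\<tau>I > 0" using \<eta> by (simp add: \<tau>I_def)
  obtain \<delta>F where \<delta>F: "\<delta>F > 0" "\<And>t. 0 < t \<and> t < \<delta>F \<Longrightarrow>
     norm (F (z0 + t *\<^sub>R d + (t^2/2) *\<^sub>R w) - F z0 - t *\<^sub>R F1 z0 d - (t^2/2) *\<^sub>R (F1 z0 w + F2 z0 d d)) \<le> \<tau>1 * t^2"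
    using taylor2[where f=F and ?f1.0=F1 and ?f2.0=F2, OF S dF \<tau>1, of d w] by blast
  obtain \<delta>G where \<delta>G: "\<delta>G > 0" "\<And>t. 0 < t \<and> t < \<delta>G \<Longrightarrow>
     norm (G (z0 + t *\<^sub>R d + (t^2/2) *\<^sub>R w) - G z0 - t *\<^sub>R G1 z0 d - (t^2/2) *\<^sub>R (G1 z0 w + G2 z0 d d)) \<le> \<tau>1 * t^2"
    using taylor2[where f=G and ?f1.0=G1 and ?f2.0=G2, OF S dG \<tau>1, of d w] by blast
  obtain \<delta>I where \<delta>I: "\<delta>I > 0" "\<And>t. 0 < t \<and> t < \<delta>I \<Longrightarrow>
     norm (I (z0 + t *\<^sub>R d + (t^2/2) *\<^sub>R w) - I z0 - t *\<^sub>R I1 z0 d - (t^2/2) *\<^sub>R (I1 z0 w + I2 z0 d d)) \<le> \<tau>I * t^2"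
    using taylor2[where f=I and ?f1.0=I1 and ?f2.0=I2, OF S dI \<tau>I, of d w] by blast
  define N where "N = norm d + norm w + 1"
  have N: "N > 0" unfolding N_def using norm_ge_zero[of d] norm_ge_zero[of w] by linarith
  define T where "T = 4 * C * \<tau>1"
  have T: "T > 0" using C \<tau>1 by (simp add: T_def)
  define m where "m = Min {\<delta>F, \<delta>G, \<delta>I, 1, r/(2*N), \<rho>I/(2*N), \<epsilon>0/(2*N), r/(2*T), \<rho>I/(2*T), \<epsilon>0/(2*T), 1/(\<mu>+\<nu>)}"
  have mpos: "m > 0" unfolding m_def using \<delta>F \<delta>G \<delta>I r N \<rho>I e0 T q q' by (subst Min_gr_iff) auto
  have mle: "m \<le> x" if "x \<in> {\<delta>F, \<delta>G, \<delta>I, 1, r/(2*N), \<rho>I/(2*N), \<epsilon>0/(2*N), r/(2*T), \<rho>I/(2*T), \<epsilon>0/(2*T), 1/(\<mu>+\<nu>)}" for x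
    unfolding m_def using that by (intro Min_le) auto
  define t where "t = m / 2"
  have t0: "t > 0" using mpos by (simp add: t_def)
  have tm: "t < m" using mpos by (simp add: t_def)
  have tF: "t < \<delta>F" and tG: "t < \<delta>G" and tI: "t < \<delta>I" and t1: "t \<le> 1"
    using tm mle[of \<delta>F] mle[of \<delta>G] mle[of \<delta>I] mle[of 1] by auto
  have tmN: "t * N \<le> m * N" using tm N by (intro mult_right_mono) auto
  have tmT: "t * T \<le> m * T" using tm T by (intro mult_right_mono) auto
  have tmmn: "t * (\<mu> + \<nu>) \<le> m * (\<mu> + \<nu>)" using tm q q' by (intro mult_right_mono) auto
  have "m * N \<le> r/2" using mle[of "r/(2*N)"] N by (simp add: field_simps)
  hence tN1: "t * N \<le> r/2" using tmN by linarith
  have "m * N \<le> \<rho>I/2" using mle[of "\<rho>I/(2*N)"] N by (simp add: field_simps)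
  hence tN2: "t * N \<le> \<rho>I/2" using tmN by linarith
  have "m * N \<le> \<epsilon>0/2" using mle[of "\<epsilon>0/(2*N)"] N by (simp add: field_simps)
  hence tN3: "t * N \<le> \<epsilon>0/2" using tmN by linarith
  have "m * T \<le> r/2" using mle[of "r/(2*T)"] T by (simp add: field_simps)
  hence tT1: "t * T \<le> r/2" using tmT by linarith
  have "m * T \<le> \<rho>I/2" using mle[of "\<rho>I/(2*T)"] T by (simp add: field_simps)
  hence tT2: "t * T \<le> \<rho>I/2" using tmT by linarith
  have "m * T \<le> \<epsilon>0/2" using mle[of "\<epsilon>0/(2*T)"] T by (simp add: field_simps)
  hence tT3: "t * T \<le> \<epsilon>0/2" using tmT by linarith
  have "m * (\<mu> + \<nu>) \<le> 1" using mle[of "1/(\<mu>+\<nu>)"] q q' by (simp add: field_simps)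
  hence tmn: "t * (\<mu> + \<nu>) \<le> 1" using tmmn by linarith
  have tt: "t^2 \<le> t" using t0 t1 by (simp add: power2_eq_square mult_left_le)
  define c where "c = z0 + t *\<^sub>R d + (t^2/2) *\<^sub>R w"
  have cz: "norm (c - z0) \<le> t * N"
  proof -
    have "norm (c - z0) \<le> t * norm d + (t^2/2) * norm w"
      unfolding c_def using t0 by (simp add: norm_triangle_le)
    moreover have "(t^2/2) * norm w \<le> t * norm w" using tt t0 by (intro mult_right_mono) auto
    ultimately show ?thesis unfolding N_def using t0 by (simp add: algebra_simps)
  qed
  define y where "y = g + (t * \<mu>) *\<^sub>R (q - g) + (t^2 * \<nu> / 2) *\<^sub>R (q' - g)"
  have yQ: "y \<in> Q"
  proof -
    have "t^2/2 \<le> t" using tt t0 by simp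
    hence "(t^2/2) * \<nu> \<le> t * \<nu>" using q' by (intro mult_right_mono) auto
    hence "t^2 * \<nu> / 2 \<le> t * \<nu>" by simp
    hence "t * \<mu> + t^2 * \<nu> / 2 \<le> 1" using tmn by (simp add: algebra_simps)
    thus ?thesis unfolding y_def using Q q q' t0 by (intro conv3) (auto simp: g_def)
  qed
  have resF: "norm (F c) \<le> \<tau>1 * t^2"
    using \<delta>F(2)[of t] t0 tF by (simp add: c_def F0 d2 w1)
  have resG: "norm (y - G c) \<le> \<tau>1 * t^2"
  proof -
    have eq: "G c - G z0 - t *\<^sub>R G1 z0 d - (t^2/2) *\<^sub>R (G1 z0 w + G2 z0 d d) = G c - y"
      by (simp add: y_def q(1) q'(1) g_def algebra_simps)
    have tay: "norm (G c - G z0 - t *\<^sub>R G1 z0 d - (t^2/2) *\<^sub>R (G1 z0 w + G2 z0 d d)) \<le> \<tau>1 * t^2"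
      using \<delta>G(2)[of t] t0 tG unfolding c_def by simp
    have "norm (G c - y) \<le> \<tau>1 * t^2" using tay unfolding eq .
    thus ?thesis by (simp add: norm_minus_commute)
  qed
  have res: "norm ((0, y) - \<Phi> c) \<le> 2 * \<tau>1 * t^2"
  proof -
    have "norm ((0, y) - \<Phi> c) \<le> norm (- F c) + norm (y - G c)"
      using norm_Pair_le[of "- F c" "y - G c"] by (simp add: \<Phi>_def)
    thus ?thesis using resF resG by simp
  qed
  have cond1: "dist z0 c \<le> r/2" using cz tN1 by (simp add: dist_norm norm_minus_commute)
  have cond2: "2 * C * norm ((0, y) - \<Phi> c) \<le> r/2"
  proof -
    have "2 * C * norm ((0, y) - \<Phi> c) \<le> 2 * C * (2 * \<tau>1 * t^2)" using res C by simp
    also have "\<dots> = T * t^2" by (simp add: T_def)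
    also have "\<dots> \<le> T * t" using tt T by simp
    finally show ?thesis using tT1 by (simp add: mult.commute)
  qed
  obtain zs where zs: "\<Phi> zs = (0, y)" "norm (zs - c) \<le> 2 * C * norm ((0, y) - \<Phi> c)"
    using graves[OF linA C openA' strictPhi cond1 cond2] by blast
  have zsc: "norm (zs - c) \<le> T * t^2"
  proof -
    have "norm (zs - c) \<le> 2 * C * (2 * \<tau>1 * t^2)" using zs(2) res C by (meson order_trans mult_left_mono less_imp_le mult_pos_pos zero_less_numeral)
    thus ?thesis by (simp add: T_def)
  qed
  have zsc': "norm (zs - c) \<le> T * t" using zsc tt T by (meson order_trans mult_left_mono less_imp_le)
  have Fzs: "F zs = 0" and Gzs: "G zs = y" using zs(1) by (auto simp: \<Phi>_def)
  have zsz: "norm (zs - z0) \<le> norm (zs - c) + norm (c - z0)" by (metis norm_triangle_ineq diff_add_cancel add_diff_eq)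
  have "norm (zs - z0) \<le> \<epsilon>0" using zsz zsc' cz tN3 tT3 by (simp add: mult.commute)
  hence notall: "\<not> (\<forall>i. (I zs - I z0) $ i < 0)" using opt Fzs Gzs yQ by blast
  have zsI: "zs \<in> cball z0 \<rho>I" using zsz zsc' cz tN2 tT2 by (simp add: dist_norm norm_minus_commute mult.commute)
  have "t * N \<ge> 0" using t0 N by simp
  hence cI': "c \<in> cball z0 \<rho>I" using cz tN2 by (simp add: dist_norm norm_minus_commute)
  have "(I zs - I z0) $ i < 0" for i
  proof -
    define E where "E = I c - I z0 - t *\<^sub>R I1 z0 d - (t^2/2) *\<^sub>R P"
    have nE: "norm E \<le> \<tau>I * t^2" using \<delta>I(2)[of t] t0 tI by (simp add: E_def c_def P_def)
    have "norm (I zs - I c) \<le> LI * norm (zs - c)" by (rule lipI[OF zsI cI'])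
    also have "\<dots> \<le> LI * (T * t^2)" using zsc LI by simp
    also have "\<dots> = \<eta>/8 * t^2" using C LI by (simp add: T_def \<tau>1_def field_simps)
    finally have n1: "norm (I zs - I c) \<le> \<eta>/8 * t^2" .
    have "(I zs - I z0) $ i = (I zs - I c) $ i + t * (I1 z0 d) $ i + (t^2/2) * P $ i + E $ i"
      by (simp add: E_def)
    moreover have "(I zs - I c) $ i \<le> \<eta>/8 * t^2" using n1 component_le_norm_cart[of "I zs - I c" i] by linarith
    moreover have "E $ i \<le> \<eta>/8 * t^2" using nE component_le_norm_cart[of E i] by (simp add: \<tau>I_def)
    moreover have "t * (I1 z0 d) $ i \<le> 0" using d1 t0 by (simp add: mult_nonneg_nonpos)
    moreover have "(t^2/2) * P $ i \<le> (t^2/2) * (- \<eta>)" using \<eta>(2)[of i] by (intro mult_left_mono) auto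
    moreover have "t^2 > 0" using t0 by simp
    moreover have "\<eta> * t^2 > 0" using \<eta>(1) t0 by simp
    moreover have "t^2/2 * (- \<eta>) = - (\<eta> * t^2) / 2" by simp
    moreover have "\<eta>/8 * t^2 = (\<eta> * t^2) / 8" by simp
    ultimately show ?thesis by linarith
  qed
  with notall show False by blast
qed



theorem theorem4p1:
  fixes I :: "'x::banach \<times> 'u::banach \<Rightarrow> real^'m::finite"
    and F :: "'x \<times> 'u \<Rightarrow> 'e0::banach"
    and G :: "'x \<times> 'u \<Rightarrow> 'e::banach"
    and I1 :: "'x \<times> 'u \<Rightarrow> ('x \<times> 'u) \<Rightarrow>\<^sub>L (real^'m)"
    and I2 :: "'x \<times> 'u \<Rightarrow> ('x \<times> 'u) \<Rightarrow>\<^sub>L ('x \<times> 'u) \<Rightarrow>\<^sub>L (real^'m)"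
    and F1 :: "'x \<times> 'u \<Rightarrow> ('x \<times> 'u) \<Rightarrow>\<^sub>L 'e0"
    and F2 :: "'x \<times> 'u \<Rightarrow> ('x \<times> 'u) \<Rightarrow>\<^sub>L ('x \<times> 'u) \<Rightarrow>\<^sub>L 'e0"
    and G1 :: "'x \<times> 'u \<Rightarrow> ('x \<times> 'u) \<Rightarrow>\<^sub>L 'e"
    and G2 :: "'x \<times> 'u \<Rightarrow> ('x \<times> 'u) \<Rightarrow>\<^sub>L ('x \<times> 'u) \<Rightarrow>\<^sub>L 'e"
    and Q :: "'e set" and x0 :: 'x and u0 :: 'u and r1 r1' :: real
  assumes Q: "Q \<noteq> {}" "closed Q" "convex Q"
    and feas: "F (x0, u0) = 0" "G (x0, u0) \<in> Q"
    and r: "r1 > 0" "r1' > 0"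
    and A1: "C2_on (ball x0 r1 \<times> ball u0 r1') I I1 I2"
            "C2_on (ball x0 r1 \<times> ball u0 r1') F F1 F2"
            "C2_on (ball x0 r1 \<times> ball u0 r1') G G1 G2"
    and A2: "bij (\<lambda>h. blinfun_apply (F1 (x0, u0)) (h, 0))"
    and A3: "blinfun_apply (G1 (x0, u0)) ` contingent_cone {z. F z = 0} (x0, u0) = UNIV"
    and opt: "loc_weak_pareto I F G Q (x0, u0)"
  shows "\<forall>d \<in> crit_cone (I1 (x0, u0)) (F1 (x0, u0)) (G1 (x0, u0)) Q (G (x0, u0)).
           \<exists>(lam, v, e) \<in> Lambda2 (I1 (x0, u0)) (F1 (x0, u0)) (G1 (x0, u0)) Q (G (x0, u0)).
             lam \<bullet> blinfun_apply (blinfun_apply (I2 (x0, u0)) d) d + blinfun_apply v (blinfun_apply (blinfun_apply (F2 (x0, u0)) d) d) + blinfun_apply e (blinfun_apply (blinfun_apply (G2 (x0, u0)) d) d) \<ge> 0"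
proof
  define z0 where "z0 = (x0, u0)"
  fix d assume dC: "d \<in> crit_cone (I1 (x0, u0)) (F1 (x0, u0)) (G1 (x0, u0)) Q (G (x0, u0))"
  define S where "S = ball x0 r1 \<times> ball u0 r1'"
  have S: "open S" "z0 \<in> S" using r by (auto simp: S_def z0_def open_Times)
  have dI: "\<And>z. z \<in> S \<Longrightarrow> (I has_derivative blinfun_apply (I1 z)) (at z)" "(I1 has_derivative blinfun_apply (I2 z0)) (at z0)"
    using A1(1) S(2) unfolding C2_on_def S_def by auto
  have dF: "\<And>z. z \<in> S \<Longrightarrow> (F has_derivative blinfun_apply (F1 z)) (at z)" "(F1 has_derivative blinfun_apply (F2 z0)) (at z0)"
    using A1(2) S(2) unfolding C2_on_def S_def by auto
  have dG: "\<And>z. z \<in> S \<Longrightarrow> (G has_derivative blinfun_apply (G1 z)) (at z)" "(G1 has_derivative blinfun_apply (G2 z0)) (at z0)"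
    using A1(3) S(2) unfolding C2_on_def S_def by auto
  have F0: "F z0 = 0" and GQ: "G z0 \<in> Q" using feas by (simp_all add: z0_def)
  have linA: "bounded_linear (\<lambda>h. (F1 z0 h, G1 z0 h))"
    by (intro bounded_linear_Pair blinfun.bounded_linear_right)
  have surjA: "surj (\<lambda>h. (F1 z0 h, G1 z0 h))"
  proof (rule surjI[where f="\<lambda>p. SOME h. F1 z0 h = fst p \<and> G1 z0 h = snd p"])
    fix p :: "'e0 \<times> 'e"
    obtain a y where p: "p = (a, y)" by (cases p)
    have "surj (\<lambda>h. blinfun_apply (F1 (x0, u0)) (h, 0))" using A2 by (rule bij_is_surj)
    then obtain hx where "a = F1 (x0, u0) (hx, 0)" by (rule surjE)
    hence hx: "F1 z0 (hx, 0) = a" by (simp add: z0_def)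
    have "y - G1 z0 (hx, 0) \<in> blinfun_apply (G1 z0) ` contingent_cone {z. F z = 0} z0"
      using A3 unfolding z0_def by simp
    then obtain k where k0: "y - G1 z0 (hx, 0) = G1 z0 k" "k \<in> contingent_cone {z. F z = 0} z0" by (rule imageE)
    hence k: "k \<in> contingent_cone {z. F z = 0} z0" "G1 z0 k = y - G1 z0 (hx, 0)" by simp_all
    have "F1 z0 k = 0" by (rule tangent_ker[OF dF(1)[OF S(2)] F0 k(1)])
    hence "F1 z0 ((hx, 0) + k) = fst p \<and> G1 z0 ((hx, 0) + k) = snd p"
      using hx k p by (simp add: blinfun.add_right)
    hence ex: "\<exists>h. F1 z0 h = fst p \<and> G1 z0 h = snd p" by blast
    show "(\<lambda>h. (F1 z0 h, G1 z0 h)) (SOME h. F1 z0 h = fst p \<and> G1 z0 h = snd p) = p"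
      using someI_ex[OF ex] by simp
  qed
  obtain C where C: "C > 0" "\<And>y. \<exists>x. (F1 z0 x, G1 z0 x) = y \<and> norm x \<le> C * norm y"
    using open_mapping_quant[OF linA surjA] by blast
  have openA: "\<exists>h. F1 z0 h = a \<and> G1 z0 h = y \<and> norm h \<le> C * norm (a, y)" for a y
    using C(2)[of "(a, y)"] by auto
  obtain \<epsilon>0 where e0: "\<epsilon>0 > 0" and e0': "\<And>x u. F (x, u) = 0 \<and> G (x, u) \<in> Q \<and> norm (x - x0) \<le> \<epsilon>0 \<and> norm (u - u0) \<le> \<epsilon>0
        \<longrightarrow> \<not> (\<forall>i. (I (x, u) - I z0) $ i < 0)"
    using opt unfolding loc_weak_pareto_def z0_def by auto
  have optz: "\<not> (\<forall>i. (I z - I z0) $ i < 0)" if "F z = 0" "G z \<in> Q" "norm (z - z0) \<le> \<epsilon>0" for z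
  proof -
    obtain x u where z: "z = (x, u)" by (cases z)
    have "z - z0 = (x - x0, u - u0)" by (simp add: z z0_def)
    hence "norm (x - x0) \<le> norm (z - z0)" "norm (u - u0) \<le> norm (z - z0)"
      by (simp_all add: norm_fst_le norm_snd_le)
    thus ?thesis using e0'[of x u] that by (simp add: z)
  qed
  define X where "X = {d. (\<forall>i. (I1 z0 d) $ i \<le> 0) \<and> F1 z0 d = 0 \<and> G1 z0 d \<in> cone_of_diff Q (G z0)}"
  have Xm: "\<exists>(lam, v, e) \<in> Lambda2 (I1 z0) (F1 z0) (G1 z0) Q (G z0).
      lam \<bullet> (\<lambda>d. I2 z0 d d) d' + blinfun_apply v ((\<lambda>d. F2 z0 d d) d') + blinfun_apply e ((\<lambda>d. G2 z0 d d) d') \<ge> 0"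
    if d': "d' \<in> X" for d'
  proof -
    have "\<exists>(lam, v, e) \<in> Lambda2 (I1 z0) (F1 z0) (G1 z0) Q (G z0).
      lam \<bullet> I2 z0 d' d' + blinfun_apply v (F2 z0 d' d') + blinfun_apply e (G2 z0 d' d') \<ge> 0"
    proof (rule multiplier_C02[OF Q(3) GQ _ openA])
      show "0 \<le> C" using C by simp
      fix w assume w1: "F1 z0 w = - F2 z0 d' d'" and w2: "G1 z0 w + G2 z0 d' d' \<in> cone_of_diff Q (G z0)"
      show "\<not> (\<forall>i. (I1 z0 w + I2 z0 d' d') $ i < 0)"
      proof
        assume w3: "\<forall>i. (I1 z0 w + I2 z0 d' d') $ i < 0"
        show False
          by (rule primal[where I=I and ?I1.0=I1 and ?I2.0=I2 and F=F and ?F1.0=F1 and ?F2.0=F2 and G=G and ?G1.0=G1 and ?G2.0=G2 and d=d' and w=w, OF S dI dF dG Q(3) GQ F0 C(1) openA e0 optz _ _ _ w1 w2 w3])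
             (use d' in \<open>auto simp: X_def\<close>)
      qed
    qed
    thus ?thesis by simp
  qed
  have dX: "d \<in> closure X" using dC unfolding crit_cone_def X_def z0_def by simp
  have "\<exists>(lam, v, e) \<in> Lambda2 (I1 z0) (F1 z0) (G1 z0) Q (G z0).
      lam \<bullet> (\<lambda>d. I2 z0 d d) d + blinfun_apply v ((\<lambda>d. F2 z0 d d) d) + blinfun_apply e ((\<lambda>d. G2 z0 d d) d) \<ge> 0"
    by (rule closure_limit[OF _ openA _ _ _ Xm dX]) (use C in \<open>auto intro!: continuous_intros\<close>)
  thus "\<exists>(lam, v, e) \<in> Lambda2 (I1 (x0, u0)) (F1 (x0, u0)) (G1 (x0, u0)) Q (G (x0, u0)).
           lam \<bullet> blinfun_apply (blinfun_apply (I2 (x0, u0)) d) d + blinfun_apply v (blinfun_apply (blinfun_apply (F2 (x0, u0)) d) d) + blinfun_apply e (blinfun_apply (blinfun_apply (G2 (x0, u0)) d) d) \<ge> 0"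
    by (simp add: z0_def)
qed

end
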